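(* Let $\Theta=(\theta_1,\theta_2,\theta_3)\in\mathbb{R}^3$ be such that the numbers $1,\theta_1,\theta_2,\theta_3$ are linearly independent over $\mathbb{Z}$. Then $$ \beta(\Theta)\geqslant \alpha(\Theta)\, g_3(\alpha(\Theta)),\qquad\text{where}\qquad g_3(\alpha)=\frac{1}{2}\left(\frac{\alpha}{1-\alpha}+\sqrt{\left(\frac{\alpha}{1-\alpha}\right)^2+\frac{4\alpha}{1-\alpha}}\right). $$
   Context: For a real number $u$, $\|u\|$ denotes the distance from $u$ to the nearest integer. For $\Theta=(\theta_1,\theta_2,\theta_3)$ and real $t\geqslant 1$ put $\psi_\Theta(t)=\min_{x}\max_{1\leqslant i\leqslant 3}\|\theta_i x\|$, the minimum taken over positive integers $x\leqslant t$. The uniform Diophantine exponent is $\alpha(\Theta)=\sup\{\gamma>0:\ \limsup_{t\to+\infty} t^\gamma\psi_\Theta(t)<+\infty\}$, and the ordinary Diophantine exponent is $\beta(\Theta)=\sup\{\gamma>0:\ \liminf_{t\to+\infty} t^\gamma\psi_\Theta(t)<+\infty\}$. It is known that $\frac13\leqslant\alpha(\Theta)\leqslant 1$. *)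

theory Defs
  imports "HOL-Analysis.Analysis"
begin

definition dnint :: "real \<Rightarrow> real" where
  "dnint u = min (u - of_int \<lfloor>u\<rfloor>) (of_int \<lceil>u\<rceil> - u)"

definition psi :: "real \<Rightarrow> real \<Rightarrow> real \<Rightarrow> real \<Rightarrow> real" where
  "psi th1 th2 th3 t =
     Min ((\<lambda>x::nat. max (dnint (th1 * real x)) (max (dnint (th2 * real x)) (dnint (th3 * real x))))
          ` {x. 1 \<le> x \<and> real x \<le> t})"

definition unif_exp :: "real \<Rightarrow> real \<Rightarrow> real \<Rightarrow> ereal" where
  "unif_exp th1 th2 th3 =
     Sup (ereal ` {\<gamma>::real. \<gamma> > 0 \<and>
        Limsup at_top (\<lambda>t. ereal (t powr \<gamma> * psi th1 th2 th3 t)) < \<infinity>})"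

definition ord_exp :: "real \<Rightarrow> real \<Rightarrow> real \<Rightarrow> ereal" where
  "ord_exp th1 th2 th3 =
     Sup (ereal ` {\<gamma>::real. \<gamma> > 0 \<and>
        Liminf at_top (\<lambda>t. ereal (t powr \<gamma> * psi th1 th2 th3 t)) < \<infinity>})"

definition g3 :: "real \<Rightarrow> real" where
  "g3 a = (1/2) * (a / (1 - a) + sqrt ((a / (1 - a))^2 + 4 * a / (1 - a)))"

end

theory Submission
  imports Defs
begin

definition det4 :: "(nat \<Rightarrow> real) \<Rightarrow> (nat \<Rightarrow> real) \<Rightarrow> (nat \<Rightarrow> real) \<Rightarrow> (nat \<Rightarrow> real) \<Rightarrow> real" where
"det4 u v w z = u 0 * v 1 * w 2 * z 3 - u 0 * v 1 * w 3 * z 2 - u 0 * v 2 * w 1 * z 3 + u 0 * v 2 * w 3 * z 1 + u 0 * v 3 * w 1 * z 2 - u 0 * v 3 * w 2 * z 1 - u 1 * v 0 * w 2 * z 3 + u 1 * v 0 * w 3 * z 2 + u 1 * v 2 * w 0 * z 3 - u 1 * v 2 * w 3 * z 0 - u 1 * v 3 * w 0 * z 2 + u 1 * v 3 * w 2 * z 0 + u 2 * v 0 * w 1 * z 3 - u 2 * v 0 * w 3 * z 1 - u 2 * v 1 * w 0 * z 3 + u 2 * v 1 * w 3 * z 0 + u 2 * v 3 * w 0 * z 1 - u 2 * v 3 * w 1 * z 0 - u 3 * v 0 * w 1 * z 2 + u 3 * v 0 * w 2 * z 1 + u 3 * v 1 * w 0 * z 2 - u 3 * v 1 * w 2 * z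 0 - u 3 * v 2 * w 0 * z 1 + u 3 * v 2 * w 1 * z 0"

definition det3r :: "(nat \<Rightarrow> real) \<Rightarrow> (nat \<Rightarrow> real) \<Rightarrow> (nat \<Rightarrow> real) \<Rightarrow> real" where
"det3r a b c = a 1 * b 2 * c 3 - a 1 * b 3 * c 2 - a 2 * b 1 * c 3 + a 2 * b 3 * c 1 + a 3 * b 1 * c 2 - a 3 * b 2 * c 1"

lemma det4_colops:
  "det4 (\<lambda>k. u k - c * p k) p r (\<lambda>k. v k - d * p k - e * r k) = det4 u p r v"
  unfolding det4_def by algebra

lemma det4_span_zero: "det4 u v w (\<lambda>k. a * u k + b * v k) = 0"
  unfolding det4_def by algebra

lemma det4_zero_first:
  assumes "u 0 = 0" "v 0 = 0"
  shows "det4 u p r v = r 0 * det3r u p v - p 0 * det3r u r v"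
  using assms unfolding det4_def det3r_def by algebra

lemma cramer0:
  "det4 u v w y * x 0 = det4 x v w y * u 0 + det4 u x w y * v 0 + det4 u v x y * w 0 + det4 u v w x * y 0"
  unfolding det4_def by algebra

lemma cramer1:
  "det4 u v w y * x 1 = det4 x v w y * u 1 + det4 u x w y * v 1 + det4 u v x y * w 1 + det4 u v w x * y 1"
  unfolding det4_def by algebra

lemma cramer2:
  "det4 u v w y * x 2 = det4 x v w y * u 2 + det4 u x w y * v 2 + det4 u v x y * w 2 + det4 u v w x * y 2"
  unfolding det4_def by algebra

lemma cramer3:
  "det4 u v w y * x 3 = det4 x v w y * u 3 + det4 u x w y * v 3 + det4 u v x y * w 3 + det4 u v w x * y 3"
  unfolding det4_def by algebra

lemma cramer:
  assumes "k < 4"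
  shows "det4 u v w y * x k = det4 x v w y * u k + det4 u x w y * v k + det4 u v x y * w k + det4 u v w x * y k"
proof -
  have "k = 0 \<or> k = 1 \<or> k = 2 \<or> k = 3" using assms by auto
  then show ?thesis using cramer0 cramer1 cramer2 cramer3 by blast
qed

definition idet4 :: "(nat \<Rightarrow> int) \<Rightarrow> (nat \<Rightarrow> int) \<Rightarrow> (nat \<Rightarrow> int) \<Rightarrow> (nat \<Rightarrow> int) \<Rightarrow> int" where
"idet4 u v w z = u 0 * v 1 * w 2 * z 3 - u 0 * v 1 * w 3 * z 2 - u 0 * v 2 * w 1 * z 3 + u 0 * v 2 * w 3 * z 1 + u 0 * v 3 * w 1 * z 2 - u 0 * v 3 * w 2 * z 1 - u 1 * v 0 * w 2 * z 3 + u 1 * v 0 * w 3 * z 2 + u 1 * v 2 * w 0 * z 3 - u 1 * v 2 * w 3 * z 0 - u 1 * v 3 * w 0 * z 2 + u 1 * v 3 * w 2 * z 0 + u 2 * v 0 * w 1 * z 3 - u 2 * v 0 * w 3 * z 1 - u 2 * v 1 * w 0 * z 3 + u 2 * v 1 * w 3 * z 0 + u 2 * v 3 * w 0 * z 1 - u 2 * v 3 * w 1 * z 0 - u 3 * v 0 * w 1 * z 2 + u 3 * v 0 * w 2 * z 1 + u 3 * v 1 * w 0 * z 2 - u 3 * v 1 * w 2 * z 0 - u 3 * v 2 * w 0 * z 1 + u 3 * v 2 * w 1 * z 0"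

lemma det4_of_int: "det4 (\<lambda>k. of_int (u k)) (\<lambda>k. of_int (v k)) (\<lambda>k. of_int (w k)) (\<lambda>k. of_int (z k)) = of_int (idet4 u v w z)"
  unfolding det4_def idet4_def by simp


lemma dnint_nonneg: "0 \<le> dnint u"
  unfolding dnint_def by (auto simp: min_def le_ceiling_iff)

lemma dnint_le: "dnint u \<le> \<bar>u - of_int a\<bar>"
proof (cases "a \<le> \<lfloor>u\<rfloor>")
  case True
  then have "u - of_int \<lfloor>u\<rfloor> \<le> \<bar>u - of_int a\<bar>" by linarith
  then show ?thesis unfolding dnint_def by linarith
next
  case False
  then have "\<lceil>u\<rceil> \<le> a" using ceiling_diff_floor_le_1[of u] by linarith
  then have "of_int \<lceil>u\<rceil> - u \<le> \<bar>u - of_int a\<bar>"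
    by (smt (verit, ccfv_SIG) of_int_le_iff)
  then show ?thesis unfolding dnint_def by linarith
qed

lemma dnint_ex: "\<exists>a::int. dnint u = \<bar>u - of_int a\<bar>"
proof (cases "u - of_int \<lfloor>u\<rfloor> \<le> of_int \<lceil>u\<rceil> - u")
  case True
  then show ?thesis unfolding dnint_def
    by (intro exI[of _ "\<lfloor>u\<rfloor>"]) (auto simp: min_def)
next
  case False
  then show ?thesis unfolding dnint_def
    by (intro exI[of _ "\<lceil>u\<rceil>"]) (auto simp: min_def)
qed

lemma dnint_half: "dnint u \<le> 1/2"
proof -
  have "\<lceil>u\<rceil> \<le> \<lfloor>u\<rfloor> + 1" using ceiling_diff_floor_le_1[of u] by linarith
  then have "real_of_int \<lceil>u\<rceil> \<le> of_int \<lfloor>u\<rfloor> + 1"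
    by (metis of_int_add of_int_le_iff of_int_1)
  then show ?thesis unfolding dnint_def by linarith
qed

lemma dnint_zero: "dnint u = 0 \<Longrightarrow> \<exists>a::int. u = of_int a"
  unfolding dnint_def by (metis diff_eq_eq eq_iff_diff_eq_0 min_def add.left_neutral)

lemma same_box:
  fixes r s :: real and N :: nat
  assumes N: "N \<ge> 1" and eq: "nat \<lfloor>real N * frac r\<rfloor> = nat \<lfloor>real N * frac s\<rfloor>"
  shows "dnint (r - s) < 1 / real N"
proof -
  have "0 \<le> real N * frac r" "0 \<le> real N * frac s" by (auto simp: frac_ge_0)
  then have fl: "\<lfloor>real N * frac r\<rfloor> = \<lfloor>real N * frac s\<rfloor>" using eq
    by (metis floor_less_zero nat_eq_iff2 not_less)
  have "\<bar>real N * frac r - real N * frac s\<bar> < 1"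
    using fl by (smt (verit, best) floor_eq_iff)
  moreover have "real N * \<bar>frac r - frac s\<bar> = \<bar>real N * frac r - real N * frac s\<bar>"
    by (simp add: right_diff_distrib[symmetric] abs_mult)
  ultimately have "real N * \<bar>frac r - frac s\<bar> < 1" by simp
  then have "\<bar>frac r - frac s\<bar> < 1 / real N" using N
    by (simp add: field_simps)
  moreover have "dnint (r - s) \<le> \<bar>(r - s) - of_int (\<lfloor>r\<rfloor> - \<lfloor>s\<rfloor>)\<bar>" by (rule dnint_le)
  moreover have "(r - s) - of_int (\<lfloor>r\<rfloor> - \<lfloor>s\<rfloor>) = frac r - frac s" by (simp add: frac_def)
  ultimately show ?thesis by simp
qed

locale dioph =
  fixes t1 t2 t3 :: real
  assumes indep: "\<And>a0 a1 a2 a3 :: int.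
      of_int a0 + of_int a1 * t1 + of_int a2 * t2 + of_int a3 * t3 = 0 \<Longrightarrow>
      a0 = 0 \<and> a1 = 0 \<and> a2 = 0 \<and> a3 = 0"
begin

definition nrm :: "nat \<Rightarrow> real" where
  "nrm x = max (dnint (t1 * real x)) (max (dnint (t2 * real x)) (dnint (t3 * real x)))"

lemma psi_eq: "psi t1 t2 t3 t = Min (nrm ` {x. 1 \<le> x \<and> real x \<le> t})"
  unfolding psi_def nrm_def ..

lemma nrm_pos: assumes "1 \<le> x" shows "0 < nrm x"
proof (rule ccontr)
  assume "\<not> 0 < nrm x"
  then have "dnint (t1 * real x) = 0" unfolding nrm_def using dnint_nonneg[of "t1 * real x"]
    by (metis dnint_nonneg max.absorb_iff2 max.bounded_iff order.eq_iff not_less)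
  then obtain a where a: "t1 * real x = of_int a" using dnint_zero by blast
  have "of_int (-a) + of_int (int x) * t1 + of_int 0 * t2 + of_int 0 * t3 = 0"
    using a by (simp add: mult.commute)
  then have "int x = 0" using indep by blast
  then show False using assms by simp
qed

lemma dirichlet:
  assumes N: "N \<ge> 1"
  shows "\<exists>x. 1 \<le> x \<and> x \<le> N^3 \<and> nrm x < 1 / real N"
proof -
  define f where "f x = (nat \<lfloor>real N * frac (t1 * real x)\<rfloor>, nat \<lfloor>real N * frac (t2 * real x)\<rfloor>,
      nat \<lfloor>real N * frac (t3 * real x)\<rfloor>)" for x :: nat
  have lt: "nat \<lfloor>real N * frac r\<rfloor> < N" for r :: real
  proof -
    have "real N * frac r < real N" using N frac_lt_1[of r] by simp
    then have "\<lfloor>real N * frac r\<rfloor> < int N" by (simp add: floor_less_iff)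
    moreover have "0 \<le> \<lfloor>real N * frac r\<rfloor>" by (simp add: frac_ge_0)
    ultimately show ?thesis by (simp add: nat_less_iff)
  qed
  have sub: "f ` {0..N^3} \<subseteq> {..<N} \<times> {..<N} \<times> {..<N}" unfolding f_def using lt by auto
  have "card (f ` {0..N^3}) \<le> card ({..<N} \<times> {..<N} \<times> {..<N})"
    by (rule card_mono[OF _ sub]) auto
  also have "\<dots> = N^3" by (simp add: card_cartesian_product power3_eq_cube)
  finally have "card (f ` {0..N^3}) < card {0..N^3}" by simp
  then have "\<not> inj_on f {0..N^3}" by (rule pigeonhole)
  then obtain x y where xy: "x \<in> {0..N^3}" "y \<in> {0..N^3}" "x \<noteq> y" "f x = f y"
    unfolding inj_on_def by blast
  have "\<exists>x y. x \<in> {0..N^3} \<and> y \<in> {0..N^3} \<and> x < y \<and> f x = f y"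
    using xy by (metis linorder_neqE_nat)
  then obtain x y where xy: "x \<le> N^3" "y \<le> N^3" "x < y" "f x = f y" by auto
  define d where "d = y - x"
  have rd: "real d = real y - real x" using xy unfolding d_def by simp
  have "dnint (t * real d) < 1 / real N"
    if "nat \<lfloor>real N * frac (t * real y)\<rfloor> = nat \<lfloor>real N * frac (t * real x)\<rfloor>" for t
  proof -
    have "t * real d = t * real y - t * real x" using rd by (simp add: right_diff_distrib)
    then show ?thesis using same_box[OF N that] by simp
  qed
  then have "dnint (t1 * real d) < 1 / real N" "dnint (t2 * real d) < 1 / real N"
      "dnint (t3 * real d) < 1 / real N"
    using xy(4) unfolding f_def by auto
  then have "nrm d < 1 / real N" unfolding nrm_def by simp
  moreover have "1 \<le> d" "d \<le> N^3" using xy unfolding d_def by auto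
  ultimately show ?thesis by blast
qed

lemma ex_better: assumes "1 \<le> q" shows "\<exists>x. 1 \<le> x \<and> nrm x < nrm q"
proof -
  have p: "0 < nrm q" using nrm_pos[OF assms] .
  obtain N :: nat where N: "1 / nrm q < real N" using reals_Archimedean2 by blast
  have "0 < 1 / nrm q" using p by simp
  then have "0 < real N" using N by linarith
  then have N1: "N \<ge> 1" by simp
  have "1 / real N < nrm q" using N p N1 by (simp add: field_simps)
  then show ?thesis using dirichlet[OF N1] by (meson less_trans)
qed

primrec qs :: "nat \<Rightarrow> nat" where
  "qs 0 = 1"
| "qs (Suc n) = (LEAST x. qs n < x \<and> nrm x < nrm (qs n))"

declare qs.simps(2)[simp del]

definition Pq :: "nat \<Rightarrow> bool" where
  "Pq n \<longleftrightarrow> 1 \<le> qs n \<and> (\<forall>y. 1 \<le> y \<and> y \<le> qs n \<longrightarrow> nrm (qs n) \<le> nrm y)"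

lemma qs_step:
  assumes "Pq n"
  shows "qs n < qs (Suc n) \<and> nrm (qs (Suc n)) < nrm (qs n) \<and>
     (\<forall>y. qs n < y \<and> y < qs (Suc n) \<longrightarrow> nrm (qs n) \<le> nrm y)"
proof -
  obtain x where x: "1 \<le> x" "nrm x < nrm (qs n)" using ex_better assms unfolding Pq_def by blast
  have "qs n < x" using x assms unfolding Pq_def by (meson not_le not_less)
  then have ex: "qs n < x \<and> nrm x < nrm (qs n)" using x by blast
  have 1: "qs n < qs (Suc n) \<and> nrm (qs (Suc n)) < nrm (qs n)"
    unfolding qs.simps by (rule LeastI[of _ x], rule ex)
  have 2: "nrm (qs n) \<le> nrm y" if "qs n < y" "y < qs (Suc n)" for y
    using not_less_Least[of y "\<lambda>x. qs n < x \<and> nrm x < nrm (qs n)"] that unfolding qs.simps by auto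
  show ?thesis using 1 2 by blast
qed

lemma Pq_all: "Pq n"
proof (induction n)
  case 0
  then show ?case unfolding Pq_def by auto
next
  case (Suc n)
  note st = qs_step[OF Suc]
  show ?case unfolding Pq_def
  proof (intro conjI allI impI)
    show "1 \<le> qs (Suc n)" using st Suc unfolding Pq_def by linarith
    fix y assume y: "1 \<le> y \<and> y \<le> qs (Suc n)"
    show "nrm (qs (Suc n)) \<le> nrm y"
    proof (cases "y \<le> qs n")
      case True
      then show ?thesis using Suc y st unfolding Pq_def by force
    next
      case False
      show ?thesis
      proof (cases "y = qs (Suc n)")
        case False
        then have "nrm (qs n) \<le> nrm y" using st y \<open>\<not> y \<le> qs n\<close> by auto
        then show ?thesis using st by linarith
      qed simp
    qed
  qed
qed

lemma qs_mono: "qs n < qs (Suc n)"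
  using qs_step[OF Pq_all] by blast
lemma nrm_dec: "nrm (qs (Suc n)) < nrm (qs n)"
  using qs_step[OF Pq_all] by blast
lemma qs_gap: "qs n < y \<Longrightarrow> y < qs (Suc n) \<Longrightarrow> nrm (qs n) \<le> nrm y"
  using qs_step[OF Pq_all] by blast

lemma qs_ge1: "1 \<le> qs n" using Pq_all unfolding Pq_def by auto

lemma qs_sm: "strict_mono qs" using qs_mono strict_mono_Suc_iff by blast

lemma qs_ge: "n + 1 \<le> qs n"
proof (induction n)
  case 0 then show ?case by simp
next
  case (Suc n) then show ?case using qs_mono[of n] by linarith
qed

lemma qs_below: "1 \<le> y \<Longrightarrow> y < qs (Suc n) \<Longrightarrow> nrm (qs n) \<le> nrm y"
proof (cases "y \<le> qs n")
  case True
  assume "1 \<le> y"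
  then show ?thesis using True Pq_all[of n] unfolding Pq_def by auto
next
  case False
  assume "y < qs (Suc n)"
  then show ?thesis using False qs_gap by auto
qed

lemma nrm_anti: "m \<le> n \<Longrightarrow> nrm (qs n) \<le> nrm (qs m)"
proof (induction n)
  case 0 then show ?case by simp
next
  case (Suc n)
  show ?case
  proof (cases "m = Suc n")
    case False
    then have "m \<le> n" using Suc by simp
    then show ?thesis using Suc nrm_dec[of n] by simp
  qed simp
qed


lemma psi_qs:
  assumes h1: "real (qs n) \<le> t" and h2: "t < real (qs (Suc n))"
  shows "psi t1 t2 t3 t = nrm (qs n)"
  unfolding psi_eq
proof (rule Min_eqI)
  have sub: "{x. 1 \<le> x \<and> real x \<le> t} \<subseteq> {..nat \<lceil>t\<rceil>}"
  proof
    fix x assume "x \<in> {x. 1 \<le> x \<and> real x \<le> t}"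
    then have "real x \<le> t" by simp
    then have "real x \<le> of_int \<lceil>t\<rceil>" using le_of_int_ceiling[of t] by (rule order_trans)
    then have "int x \<le> \<lceil>t\<rceil>" by (metis of_int_le_iff of_int_of_nat_eq)
    then show "x \<in> {..nat \<lceil>t\<rceil>}" by (simp add: le_nat_iff)
  qed
  show "finite (nrm ` {x. 1 \<le> x \<and> real x \<le> t})"
    by (intro finite_imageI finite_subset[OF sub] finite_atMost)
  have "qs n \<in> {x. 1 \<le> x \<and> real x \<le> t}" using h1 qs_ge1[of n] by blast
  then show "nrm (qs n) \<in> nrm ` {x. 1 \<le> x \<and> real x \<le> t}" by (rule imageI)
  fix z assume "z \<in> nrm ` {x. 1 \<le> x \<and> real x \<le> t}"
  then obtain y where y: "z = nrm y" "1 \<le> y" "real y \<le> t" by blast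
  then have "real y < real (qs (Suc n))" using h2 by (rule_tac order.strict_trans1)
  then have "y < qs (Suc n)" by (simp only: of_nat_less_iff)
  then show "nrm (qs n) \<le> z" using qs_below[OF y(2)] y(1) by blast
qed
end

definition lin :: "(nat \<Rightarrow> real) \<Rightarrow> (nat \<Rightarrow> real) \<Rightarrow> real" where
  "lin c z = c 0 * z 0 + c 1 * z 1 + c 2 * z 2 + c 3 * z 3"

definition unitv :: "nat \<Rightarrow> nat \<Rightarrow> real" where "unitv l = (\<lambda>k. if k = l then 1 else 0)"

lemma det4_lin: "det4 u v w z = lin (\<lambda>i. det4 u v w (unitv i)) z"
  unfolding lin_def unitv_def det4_def by simp algebra

lemma skew_det:
  "det4 (\<lambda>k. if k = 0 then a 0 else f k * a 0 - a k) (\<lambda>k. if k = 0 then b 0 else f k * b 0 - b k)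
        (\<lambda>k. if k = 0 then c 0 else f k * c 0 - c k) (\<lambda>k. if k = 0 then d 0 else f k * d 0 - d k)
   = - det4 a b c d"
  unfolding det4_def by simp algebra


definition sp2 :: "(nat \<Rightarrow> real) \<Rightarrow> (nat \<Rightarrow> real) \<Rightarrow> (nat \<Rightarrow> real) \<Rightarrow> bool" where
  "sp2 u v w \<longleftrightarrow> (\<exists>a b. w 0 = a * u 0 + b * v 0 \<and> w 1 = a * u 1 + b * v 1 \<and>
      w 2 = a * u 2 + b * v 2 \<and> w 3 = a * u 3 + b * v 3)"

lemma det4_cong4: "z 0 = z' 0 \<Longrightarrow> z 1 = z' 1 \<Longrightarrow> z 2 = z' 2 \<Longrightarrow> z 3 = z' 3 \<Longrightarrow> det4 u v w z = det4 u v w z'"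
  unfolding det4_def by simp

lemma det4_sp2_zero: assumes "sp2 u v z" shows "det4 u v w z = 0"
proof -
  obtain a b where ab: "z 0 = a * u 0 + b * v 0" "z 1 = a * u 1 + b * v 1"
      "z 2 = a * u 2 + b * v 2" "z 3 = a * u 3 + b * v 3" using assms unfolding sp2_def by blast
  have "det4 u v w z = det4 u v w (\<lambda>k. a * u k + b * v k)" by (rule det4_cong4; simp only: ab)
  also have "\<dots> = 0" by (rule det4_span_zero)
  finally show ?thesis .
qed

lemma idt_1_0:
  fixes u v w :: "nat \<Rightarrow> real"
  shows "(u 0 * v 1 - u 1 * v 0) * w 0 - (w 0 * v 1 - w 1 * v 0) * u 0 - (u 0 * w 1 - u 1 * w 0) * v 0 = 0"
  by algebra

lemma idt_1_1:
  fixes u v w :: "nat \<Rightarrow> real"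
  shows "(u 0 * v 1 - u 1 * v 0) * w 1 - (w 0 * v 1 - w 1 * v 0) * u 1 - (u 0 * w 1 - u 1 * w 0) * v 1 = 0"
  by algebra

lemma idt_1_2:
  fixes u v w :: "nat \<Rightarrow> real"
  shows "(u 0 * v 1 - u 1 * v 0) * w 2 - (w 0 * v 1 - w 1 * v 0) * u 2 - (u 0 * w 1 - u 1 * w 0) * v 2 = det4 u v w (unitv 3)"
  unfolding det4_def unitv_def by simp algebra

lemma idt_1_3:
  fixes u v w :: "nat \<Rightarrow> real"
  shows "(u 0 * v 1 - u 1 * v 0) * w 3 - (w 0 * v 1 - w 1 * v 0) * u 3 - (u 0 * w 1 - u 1 * w 0) * v 3 = - det4 u v w (unitv 2)"
  unfolding det4_def unitv_def by simp algebra

lemma idt_2_0: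
  fixes u v w :: "nat \<Rightarrow> real"
  shows "(u 0 * v 2 - u 2 * v 0) * w 0 - (w 0 * v 2 - w 2 * v 0) * u 0 - (u 0 * w 2 - u 2 * w 0) * v 0 = 0"
  by algebra

lemma idt_2_1:
  fixes u v w :: "nat \<Rightarrow> real"
  shows "(u 0 * v 2 - u 2 * v 0) * w 1 - (w 0 * v 2 - w 2 * v 0) * u 1 - (u 0 * w 2 - u 2 * w 0) * v 1 = - det4 u v w (unitv 3)"
  unfolding det4_def unitv_def by simp algebra

lemma idt_2_2:
  fixes u v w :: "nat \<Rightarrow> real"
  shows "(u 0 * v 2 - u 2 * v 0) * w 2 - (w 0 * v 2 - w 2 * v 0) * u 2 - (u 0 * w 2 - u 2 * w 0) * v 2 = 0"
  by algebra

lemma idt_2_3: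
  fixes u v w :: "nat \<Rightarrow> real"
  shows "(u 0 * v 2 - u 2 * v 0) * w 3 - (w 0 * v 2 - w 2 * v 0) * u 3 - (u 0 * w 2 - u 2 * w 0) * v 3 = det4 u v w (unitv 1)"
  unfolding det4_def unitv_def by simp algebra

lemma idt_3_0:
  fixes u v w :: "nat \<Rightarrow> real"
  shows "(u 0 * v 3 - u 3 * v 0) * w 0 - (w 0 * v 3 - w 3 * v 0) * u 0 - (u 0 * w 3 - u 3 * w 0) * v 0 = 0"
  by algebra

lemma idt_3_1:
  fixes u v w :: "nat \<Rightarrow> real"
  shows "(u 0 * v 3 - u 3 * v 0) * w 1 - (w 0 * v 3 - w 3 * v 0) * u 1 - (u 0 * w 3 - u 3 * w 0) * v 1 = det4 u v w (unitv 2)"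
  unfolding det4_def unitv_def by simp algebra

lemma idt_3_2:
  fixes u v w :: "nat \<Rightarrow> real"
  shows "(u 0 * v 3 - u 3 * v 0) * w 2 - (w 0 * v 3 - w 3 * v 0) * u 2 - (u 0 * w 3 - u 3 * w 0) * v 2 = - det4 u v w (unitv 1)"
  unfolding det4_def unitv_def by simp algebra

lemma idt_3_3:
  fixes u v w :: "nat \<Rightarrow> real"
  shows "(u 0 * v 3 - u 3 * v 0) * w 3 - (w 0 * v 3 - w 3 * v 0) * u 3 - (u 0 * w 3 - u 3 * w 0) * v 3 = 0"
  by algebra


lemma I3:
  assumes m: "u 0 * v j - u j * v 0 \<noteq> 0" and j: "j \<in> {1,2,3}" and ns: "\<not> sp2 u v w"
  shows "\<exists>l\<in>{1,2,3}. det4 u v w (unitv l) \<noteq> 0"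
proof (rule ccontr)
  assume "\<not> ?thesis"
  then have z: "det4 u v w (unitv 1) = 0" "det4 u v w (unitv 2) = 0" "det4 u v w (unitv 3) = 0" by auto
  define M where "M = u 0 * v j - u j * v 0"
  define a where "a = (w 0 * v j - w j * v 0) / M"
  define b where "b = (u 0 * w j - u j * w 0) / M"
  have M0: "M \<noteq> 0" using m unfolding M_def .
  have core: "M * w k - (w 0 * v j - w j * v 0) * u k - (u 0 * w j - u j * w 0) * v k = 0"
    if "k \<in> {0,1,2,3}" for k
    using j that unfolding M_def
    by (elim insertE emptyE; hypsubst; simp only: idt_1_0 idt_1_1 idt_1_2 idt_1_3 idt_2_0 idt_2_1 idt_2_2 idt_2_3
      idt_3_0 idt_3_1 idt_3_2 idt_3_3 z minus_zero)
  have e: "w k = a * u k + b * v k" if "k \<in> {0,1,2,3}" for k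
  proof -
    have h: "M * (a * u k + b * v k) = (w 0 * v j - w j * v 0) * u k + (u 0 * w j - u j * w 0) * v k"
      unfolding a_def b_def using M0 by (simp add: distrib_left)
    have "M * w k = M * (a * u k + b * v k)"
      using core[OF that] h by linarith
    then show ?thesis using M0 by simp
  qed
  have "sp2 u v w" unfolding sp2_def using e by blast
  then show False using ns by blast
qed

lemma PL2:
  assumes m: "u 0 * v j - u j * v 0 \<noteq> 0" and j: "j \<in> {1,2,3}"
  shows "\<exists>l\<in>{1,2,3}. \<exists>l'\<in>{1,2,3}. det4 u v (unitv l) (unitv l') \<noteq> 0"
proof -
  have a: "det4 u v (unitv 2) (unitv 3) = u 0 * v 1 - u 1 * v 0"
    and b: "det4 u v (unitv 1) (unitv 3) = - (u 0 * v 2 - u 2 * v 0)"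
    and c: "det4 u v (unitv 1) (unitv 2) = u 0 * v 3 - u 3 * v 0"
    unfolding det4_def unitv_def by simp_all
  show ?thesis using j m a b c by auto
qed

context dioph begin

definition th :: "nat \<Rightarrow> real" where "th i = (if i = 1 then t1 else if i = 2 then t2 else t3)"

definition ai :: "nat \<Rightarrow> nat \<Rightarrow> int" where
  "ai i x = (SOME a. dnint (th i * real x) = \<bar>th i * real x - of_int a\<bar>)"

lemma ai: "dnint (th i * real x) = \<bar>th i * real x - of_int (ai i x)\<bar>"
  unfolding ai_def by (rule someI_ex, rule dnint_ex)

definition X :: "nat \<Rightarrow> nat \<Rightarrow> int" where
  "X n k = (if k = 0 then int (qs n) else ai k (qs n))"

definition RX :: "nat \<Rightarrow> nat \<Rightarrow> real" where "RX n k = real_of_int (X n k)"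

definition zeta :: "nat \<Rightarrow> real" where "zeta n = nrm (qs n)"

definition Y :: "nat \<Rightarrow> nat \<Rightarrow> real" where
  "Y n k = (if k = 0 then real (qs n) else th k * real (qs n) - of_int (ai k (qs n)))"

lemma Y_skew: "Y n = (\<lambda>k. if k = 0 then RX n 0 else th k * RX n 0 - RX n k)"
  unfolding Y_def RX_def X_def by auto

lemma nrm_th: "nrm x = max (dnint (th 1 * real x)) (max (dnint (th 2 * real x)) (dnint (th 3 * real x)))"
  unfolding nrm_def th_def by simp

lemma Y_err: assumes "k \<in> {1,2,3}" shows "\<bar>Y n k\<bar> \<le> zeta n"
proof -
  have "\<bar>Y n k\<bar> = dnint (th k * real (qs n))" using assms ai[of k "qs n"] unfolding Y_def by auto
  also have "\<dots> \<le> zeta n" using assms unfolding zeta_def nrm_th by auto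
  finally show ?thesis .
qed

lemma zeta_att: "\<exists>k\<in>{1,2,3}. \<bar>Y n k\<bar> = zeta n"
proof -
  have e: "\<bar>Y n k\<bar> = dnint (th k * real (qs n))" if "k \<in> {1,2,3}" for k
    using that ai[of k "qs n"] unfolding Y_def by auto
  show ?thesis unfolding zeta_def nrm_th using e[of 1] e[of 2] e[of 3]
    by (simp add: max_def split: if_splits)
qed

lemma zeta_pos: "0 < zeta n" unfolding zeta_def using nrm_pos qs_ge1 by blast

lemma zeta_half: "zeta n \<le> 1/2"
  unfolding zeta_def nrm_def by (intro max.boundedI dnint_half)

lemma zeta_dec: "m < n \<Longrightarrow> zeta n < zeta m"
proof -
  assume "m < n"
  then have "Suc m \<le> n" by simp
  then have "zeta n \<le> zeta (Suc m)" unfolding zeta_def by (rule nrm_anti)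
  also have "\<dots> < zeta m" unfolding zeta_def by (rule nrm_dec)
  finally show ?thesis .
qed

lemma zeta_anti: "m \<le> n \<Longrightarrow> zeta n \<le> zeta m"
  unfolding zeta_def by (rule nrm_anti)

lemma qs_less: "m < n \<Longrightarrow> qs m < qs n" using qs_sm by (simp add: strict_mono_less)

lemma nonpar:
  assumes "A < B"
  shows "\<exists>j\<in>{1,2,3}. RX A 0 * RX B j - RX A j * RX B 0 \<noteq> 0"
proof (rule ccontr)
  assume "\<not> ?thesis"
  then have m: "RX A 0 * RX B j = RX A j * RX B 0" if "j \<in> {1,2,3}" for j using that by auto
  obtain j where j: "j \<in> {1,2,3}" "\<bar>Y A j\<bar> = zeta A" using zeta_att by blast
  have qA: "RX A 0 = real (qs A)" and qB: "RX B 0 = real (qs B)" unfolding RX_def X_def by auto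
  have "real (qs A) * Y B j = real (qs B) * Y A j"
    using m[OF j(1)] j(1) unfolding Y_skew qA qB by (auto simp: algebra_simps)
  then have "real (qs A) * \<bar>Y B j\<bar> = real (qs B) * zeta A"
    using j(2) by (metis abs_mult abs_of_nat)
  moreover have "\<bar>Y B j\<bar> \<le> zeta B" using Y_err[OF j(1)] .
  moreover have "zeta B < zeta A" using zeta_dec[OF assms] .
  moreover have "real (qs A) < real (qs B)" using qs_less[OF assms] by simp
  moreover have "0 < zeta A" by (rule zeta_pos)
  moreover have "0 < real (qs A)" using qs_ge1[of A] by simp
  ultimately show False
    by (smt (verit, ccfv_threshold) mult_le_cancel_left_pos mult_strict_right_mono)
qed

lemma hyper:
  fixes c :: "nat \<Rightarrow> int"
  assumes nz: "c 0 \<noteq> 0 \<or> c 1 \<noteq> 0 \<or> c 2 \<noteq> 0 \<or> c 3 \<noteq> 0"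
    and van: "\<And>n. n \<ge> N \<Longrightarrow> lin (\<lambda>i. of_int (c i)) (RX n) = 0"
  shows False
proof -
  define \<kappa> where "\<kappa> = of_int (c 0) + of_int (c 1) * t1 + of_int (c 2) * t2 + of_int (c 3) * t3"
  define S :: real where "S = \<bar>of_int (c 1)\<bar> + \<bar>of_int (c 2)\<bar> + \<bar>of_int (c 3)\<bar>"
  have key: "lin (\<lambda>i. of_int (c i)) (RX n) = real (qs n) * \<kappa> -
     (of_int (c 1) * Y n 1 + of_int (c 2) * Y n 2 + of_int (c 3) * Y n 3)" for n
    unfolding lin_def \<kappa>_def Y_def RX_def X_def th_def by (simp add: algebra_simps)
  have bnd: "real (qs n) * \<bar>\<kappa>\<bar> \<le> S" if "n \<ge> N" for n
  proof -
    have e: "real (qs n) * \<kappa> = of_int (c 1) * Y n 1 + of_int (c 2) * Y n 2 + of_int (c 3) * Y n 3"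
      using key[of n] van[OF that] by simp
    have y: "\<bar>Y n i\<bar> \<le> 1" if "i \<in> {1,2,3}" for i
      using Y_err[OF that, of n] zeta_half[of n] by linarith
    have t: "\<bar>a + b + d\<bar> \<le> \<bar>a\<bar> + \<bar>b\<bar> + \<bar>d\<bar>" for a b d :: real by linarith
    have m: "\<bar>of_int (c i) * Y n i\<bar> \<le> \<bar>of_int (c i)\<bar>" if "i \<in> {1,2,3}" for i
      unfolding abs_mult by (rule mult_right_le_one_le) (auto simp: y[OF that])
    have "real (qs n) * \<bar>\<kappa>\<bar> = \<bar>of_int (c 1) * Y n 1 + of_int (c 2) * Y n 2 + of_int (c 3) * Y n 3\<bar>"
      unfolding e[symmetric] abs_mult by simp
    also have "\<dots> \<le> \<bar>of_int (c 1) * Y n 1\<bar> + \<bar>of_int (c 2) * Y n 2\<bar> + \<bar>of_int (c 3) * Y n 3\<bar>"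
      by (rule t)
    also have "\<dots> \<le> S" unfolding S_def using m[of 1] m[of 2] m[of 3] by simp
    finally show ?thesis .
  qed
  have "\<kappa> = 0"
  proof (rule ccontr)
    assume k: "\<kappa> \<noteq> 0"
    obtain m :: nat where m: "S / \<bar>\<kappa>\<bar> < real m" using reals_Archimedean2 by blast
    define n where "n = max N m"
    have "real m \<le> real n" unfolding n_def by simp
    also have "real n < real (qs n)" using qs_ge[of n] by simp
    finally have "S / \<bar>\<kappa>\<bar> < real (qs n)" using m by linarith
    moreover have "0 < \<bar>\<kappa>\<bar>" using k by simp
    ultimately have "S < real (qs n) * \<bar>\<kappa>\<bar>" by (simp add: pos_divide_less_eq)
    moreover have "n \<ge> N" unfolding n_def by simp
    ultimately show False using bnd[of n] by linarith
  qed
  then have "of_int (c 0) + of_int (c 1) * t1 + of_int (c 2) * t2 + of_int (c 3) * t3 = 0"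
    unfolding \<kappa>_def .
  then show False using indep nz by blast
qed

end

lemma det4_rep1: "det4 u v w u = (0::real)" unfolding det4_def by algebra
lemma det4_rep2: "det4 u v w v = (0::real)" unfolding det4_def by algebra
lemma det4_rep3: "det4 u v w w = (0::real)" unfolding det4_def by algebra

lemma det4_lin2: "det4 u v w (\<lambda>k. a * p k + b * r k) = a * det4 u v w p + b * det4 u v w r"
  unfolding det4_def by algebra

lemma det4_lin3: "det4 U V W (\<lambda>k. a * u k + b * v k + c * w k) =
    a * det4 U V W u + b * det4 U V W v + c * det4 U V W w"
  unfolding det4_def by algebra

lemma det4_sp2_lin:
  assumes "sp2 p r z" "det4 u v w p = 0" "det4 u v w r = 0"
  shows "det4 u v w z = 0"
proof -
  obtain a b where ab: "z 0 = a * p 0 + b * r 0" "z 1 = a * p 1 + b * r 1"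
      "z 2 = a * p 2 + b * r 2" "z 3 = a * p 3 + b * r 3" using assms(1) unfolding sp2_def by blast
  have "det4 u v w z = det4 u v w (\<lambda>k. a * p k + b * r k)" by (rule det4_cong4; simp only: ab)
  also have "\<dots> = 0" unfolding det4_lin2 using assms by simp
  finally show ?thesis .
qed

lemma sp2_trans2:
  assumes "sp2 u v p" "sp2 u v r" "sp2 p r z"
  shows "sp2 u v z"
proof -
  obtain a b where ab: "p 0 = a * u 0 + b * v 0" "p 1 = a * u 1 + b * v 1"
      "p 2 = a * u 2 + b * v 2" "p 3 = a * u 3 + b * v 3" using assms(1) unfolding sp2_def by blast
  obtain c d where cd: "r 0 = c * u 0 + d * v 0" "r 1 = c * u 1 + d * v 1"
      "r 2 = c * u 2 + d * v 2" "r 3 = c * u 3 + d * v 3" using assms(2) unfolding sp2_def by blast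
  obtain e f where ef: "z 0 = e * p 0 + f * r 0" "z 1 = e * p 1 + f * r 1"
      "z 2 = e * p 2 + f * r 2" "z 3 = e * p 3 + f * r 3" using assms(3) unfolding sp2_def by blast
  show ?thesis unfolding sp2_def
    by (rule exI[of _ "e * a + f * c"], rule exI[of _ "e * b + f * d"])
       (intro conjI; simp only: ab cd ef; algebra)
qed

lemma sp2_self1: "sp2 u v u" unfolding sp2_def by (rule exI[of _ 1], rule exI[of _ 0]) simp
lemma sp2_self2: "sp2 u v v" unfolding sp2_def by (rule exI[of _ 0], rule exI[of _ 1]) simp

lemma cram_span:
  assumes D: "det4 u v w y \<noteq> 0" and x: "det4 u v w x = 0"
  shows "det4 U V W x = (det4 x v w y / det4 u v w y) * det4 U V W u +
     (det4 u x w y / det4 u v w y) * det4 U V W v + (det4 u v x y / det4 u v w y) * det4 U V W w"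
proof -
  let ?D = "det4 u v w y"
  have c: "x k = (det4 x v w y / ?D) * u k + (det4 u x w y / ?D) * v k + (det4 u v x y / ?D) * w k"
    if "k < 4" for k
  proof -
    have "?D * x k = det4 x v w y * u k + det4 u x w y * v k + det4 u v x y * w k"
      using cramer[OF that, of u v w y x] x by simp
    then show ?thesis using D by (simp add: field_simps)
  qed
  have "det4 U V W x = det4 U V W (\<lambda>k. (det4 x v w y / ?D) * u k + (det4 u x w y / ?D) * v k + (det4 u v x y / ?D) * w k)"
    by (rule det4_cong4) (rule c; simp)+
  then show ?thesis by (simp only: det4_lin3)
qed

definition iunit :: "nat \<Rightarrow> nat \<Rightarrow> int" where "iunit l = (\<lambda>k. if k = l then 1 else 0)"

lemma unitv_int: "unitv l = (\<lambda>k. of_int (iunit l k))"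
  unfolding unitv_def iunit_def by auto

lemma det4_unit_big: "l \<notin> {0,1,2,3} \<Longrightarrow> det4 u v w (unitv l) = 0"
  unfolding det4_def unitv_def by auto

context dioph begin

lemma RX_fun: "RX n = (\<lambda>k. of_int (X n k))" unfolding RX_def by auto

lemma hyp_gen:
  fixes U V W :: "nat \<Rightarrow> int"
  assumes nz: "\<exists>l. det4 (\<lambda>k. of_int (U k)) (\<lambda>k. of_int (V k)) (\<lambda>k. of_int (W k)) (unitv l) \<noteq> 0"
    and van: "\<And>n. n \<ge> N \<Longrightarrow> det4 (\<lambda>k. of_int (U k)) (\<lambda>k. of_int (V k)) (\<lambda>k. of_int (W k)) (RX n) = 0"
  shows False
proof -
  define c where "c i = idet4 U V W (iunit i)" for i
  have ci: "(\<lambda>i. real_of_int (c i)) = (\<lambda>i. det4 (\<lambda>k. of_int (U k)) (\<lambda>k. of_int (V k)) (\<lambda>k. of_int (W k)) (unitv i))"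
    by (rule ext) (simp add: c_def unitv_int det4_of_int)
  obtain l where l: "det4 (\<lambda>k. of_int (U k)) (\<lambda>k. of_int (V k)) (\<lambda>k. of_int (W k)) (unitv l) \<noteq> 0"
    using nz by blast
  then have "l \<in> {0,1,2,3}" using det4_unit_big by blast
  moreover have "c l \<noteq> 0" using l fun_cong[OF ci, of l] by auto
  ultimately have nz': "c 0 \<noteq> 0 \<or> c 1 \<noteq> 0 \<or> c 2 \<noteq> 0 \<or> c 3 \<noteq> 0" by auto
  show False
  proof (rule hyper[OF nz'])
    fix n assume "N \<le> n"
    then show "lin (\<lambda>i. real_of_int (c i)) (RX n) = 0"
      unfolding ci det4_lin[symmetric] using van by simp
  qed
qed

lemma PLf: "\<not> (\<forall>n\<ge>N. sp2 (RX A) (RX (Suc A)) (RX n))"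
proof
  assume all: "\<forall>n\<ge>N. sp2 (RX A) (RX (Suc A)) (RX n)"
  obtain j where j: "j \<in> {1,2,3}" "RX A 0 * RX (Suc A) j - RX A j * RX (Suc A) 0 \<noteq> 0"
    using nonpar[of A "Suc A"] by auto
  obtain l l' where ll: "det4 (RX A) (RX (Suc A)) (unitv l) (unitv l') \<noteq> 0"
    using PL2[OF j(2,1)] by blast
  show False
  proof (rule hyp_gen[of "X A" "X (Suc A)" "iunit l" N])
    show "\<exists>l'. det4 (\<lambda>k. of_int (X A k)) (\<lambda>k. of_int (X (Suc A) k)) (\<lambda>k. of_int (iunit l k)) (unitv l') \<noteq> 0"
      using ll unfolding RX_fun unitv_int by blast
    fix n assume "N \<le> n"
    then have "sp2 (RX A) (RX (Suc A)) (RX n)" using all by blast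
    then have "det4 (RX A) (RX (Suc A)) (unitv l) (RX n) = 0" by (rule det4_sp2_zero)
    then show "det4 (\<lambda>k. of_int (X A k)) (\<lambda>k. of_int (X (Suc A) k)) (\<lambda>k. of_int (iunit l k)) (RX n) = 0"
      unfolding RX_fun unitv_int by simp
  qed
qed

definition indep3 :: "nat \<Rightarrow> bool" where
  "indep3 P \<longleftrightarrow> \<not> sp2 (RX P) (RX (Suc P)) (RX (Suc (Suc P)))"

lemma starts: "\<exists>P\<ge>N. indep3 P"
proof (rule ccontr)
  assume "\<not> ?thesis"
  then have h: "sp2 (RX P) (RX (Suc P)) (RX (Suc (Suc P)))" if "P \<ge> N" for P
    using that unfolding indep3_def by auto
  have "sp2 (RX N) (RX (Suc N)) (RX (N + d)) \<and> sp2 (RX N) (RX (Suc N)) (RX (Suc (N + d)))" for d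
  proof (induction d)
    case 0 then show ?case by (simp add: sp2_self1 sp2_self2)
  next
    case (Suc d)
    have "sp2 (RX N) (RX (Suc N)) (RX (Suc (Suc (N + d))))"
      using sp2_trans2[OF Suc.IH[THEN conjunct1] Suc.IH[THEN conjunct2] h[of "N + d"]] by simp
    then show ?case using Suc.IH by simp
  qed
  then have "\<forall>n\<ge>N. sp2 (RX N) (RX (Suc N)) (RX n)"
    by (metis le_add_diff_inverse)
  then show False using PLf by blast
qed

lemma indep3_nz:
  assumes "indep3 P"
  shows "\<exists>l. det4 (RX P) (RX (Suc P)) (RX (Suc (Suc P))) (unitv l) \<noteq> 0"
proof -
  obtain j where j: "j \<in> {1,2,3}" "RX P 0 * RX (Suc P) j - RX P j * RX (Suc P) 0 \<noteq> 0"
    using nonpar[of P "Suc P"] by auto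
  show ?thesis using I3[OF j(2,1)] assms unfolding indep3_def by blast
qed

lemma comb:
  "\<exists>P\<ge>N. \<exists>B>Suc P. sp2 (RX (Suc P)) (RX (Suc (Suc P))) (RX B) \<and>
      idet4 (X P) (X (Suc P)) (X (Suc (Suc P))) (X (Suc B)) \<noteq> 0"
proof (rule ccontr)
  assume no: "\<not> ?thesis"
  obtain P0 where P0: "P0 \<ge> N" "indep3 P0" using starts by blast
  define cf where "cf z = det4 (RX P0) (RX (Suc P0)) (RX (Suc (Suc P0))) z" for z
  define Good where "Good P \<longleftrightarrow> P \<ge> P0 \<and> indep3 P \<and> (\<forall>n. P0 \<le> n \<and> n \<le> Suc (Suc P) \<longrightarrow> cf (RX n) = 0)" for P
  have G0: "Good P0"
  proof -
    have "cf (RX n) = 0" if "P0 \<le> n" "n \<le> Suc (Suc P0)" for n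
    proof -
      have "n = P0 \<or> n = Suc P0 \<or> n = Suc (Suc P0)" using that by auto
      then show ?thesis unfolding cf_def using det4_rep1 det4_rep2 det4_rep3 by auto
    qed
    then show ?thesis unfolding Good_def using P0 by auto
  qed
  have step: "\<exists>P'>P. Good P'" if G: "Good P" for P
  proof -
    define A where "A = Suc P"
    have GP: "P \<ge> P0" "indep3 P" "\<And>n. P0 \<le> n \<Longrightarrow> n \<le> Suc (Suc P) \<Longrightarrow> cf (RX n) = 0"
      using G unfolding Good_def by auto
    define Q where "Q n \<longleftrightarrow> A \<le> n \<and> \<not> sp2 (RX A) (RX (Suc A)) (RX n)" for n
    have exQ: "\<exists>n. Q n" using PLf[of A A] unfolding Q_def by auto
    define Bp where "Bp = (LEAST n. Q n)"
    have QB: "Q Bp" unfolding Bp_def by (rule LeastI_ex[OF exQ])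
    have notQ: "\<not> Q n" if "n < Bp" for n using not_less_Least[of n Q] that unfolding Bp_def by blast
    have "Bp \<noteq> A" using QB unfolding Q_def using sp2_self1 by blast
    moreover have "Bp \<noteq> Suc A" using QB unfolding Q_def using sp2_self2 by blast
    moreover have "A \<le> Bp" using QB unfolding Q_def by simp
    ultimately have BpA: "Suc (Suc A) \<le> Bp" by linarith
    define B where "B = Bp - 1"
    have BA: "Suc A \<le> B" "Suc B = Bp" using BpA unfolding B_def by auto
    have inpl: "sp2 (RX A) (RX (Suc A)) (RX n)" if "A \<le> n" "n \<le> B" for n
      using notQ[of n] that BA unfolding Q_def by auto
    have outpl: "\<not> sp2 (RX A) (RX (Suc A)) (RX (Suc B))" using QB BA unfolding Q_def by simp
    have cfA: "cf (RX A) = 0" "cf (RX (Suc A)) = 0" using GP(1,3) unfolding A_def by auto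
    have cfmid: "cf (RX n) = 0" if "A \<le> n" "n \<le> B" for n
      using det4_sp2_lin[OF inpl[OF that]] cfA unfolding cf_def by blast
    have "idet4 (X P) (X (Suc P)) (X (Suc (Suc P))) (X (Suc B)) = 0"
      using no GP(1) P0(1) BA inpl[of B] unfolding A_def by force
    then have d0: "det4 (RX P) (RX A) (RX (Suc A)) (RX (Suc B)) = 0"
      unfolding RX_fun A_def det4_of_int by simp
    obtain l where l: "det4 (RX P) (RX A) (RX (Suc A)) (unitv l) \<noteq> 0"
      using indep3_nz[OF GP(2)] unfolding A_def by blast
    have cfB: "cf (RX (Suc B)) = 0"
    proof -
      have "cf (RX (Suc B)) = (det4 (RX (Suc B)) (RX A) (RX (Suc A)) (unitv l) / det4 (RX P) (RX A) (RX (Suc A)) (unitv l)) * cf (RX P) +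
          (det4 (RX P) (RX (Suc B)) (RX (Suc A)) (unitv l) / det4 (RX P) (RX A) (RX (Suc A)) (unitv l)) * cf (RX A) +
          (det4 (RX P) (RX A) (RX (Suc B)) (unitv l) / det4 (RX P) (RX A) (RX (Suc A)) (unitv l)) * cf (RX (Suc A))"
        unfolding cf_def by (rule cram_span[OF l d0])
      moreover have "cf (RX P) = 0" using GP(1,3) by auto
      ultimately show ?thesis using cfA by simp
    qed
    define P' where "P' = B - 1"
    have P'B: "Suc P' = B" using BA unfolding P'_def by auto
    have "indep3 P'"
      unfolding indep3_def P'B
    proof
      assume "sp2 (RX P') (RX B) (RX (Suc B))"
      moreover have "sp2 (RX A) (RX (Suc A)) (RX P')" using inpl[of P'] P'B BA by simp
      moreover have "sp2 (RX A) (RX (Suc A)) (RX B)" using inpl[of B] BA by simp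
      ultimately have "sp2 (RX A) (RX (Suc A)) (RX (Suc B))" using sp2_trans2 by blast
      then show False using outpl by blast
    qed
    moreover have "cf (RX n) = 0" if "P0 \<le> n" "n \<le> Suc (Suc P')" for n
    proof -
      have "n \<le> Suc (Suc P) \<or> (A \<le> n \<and> n \<le> B) \<or> n = Suc B" using that P'B unfolding A_def by linarith
      then show ?thesis using GP(3) that cfmid cfB by auto
    qed
    moreover have "P' > P" "P' \<ge> P0" using P'B BA GP(1) unfolding A_def by auto
    ultimately show ?thesis unfolding Good_def by blast
  qed
  have far: "\<exists>P\<ge>P0 + k. Good P" for k
  proof (induction k)
    case 0 then show ?case using G0 by auto
  next
    case (Suc k)
    then obtain P where "P \<ge> P0 + k" "Good P" by blast
    then obtain P' where "P' > P" "Good P'" using step by blast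
    then show ?case using \<open>P \<ge> P0 + k\<close> by (intro exI[of _ P']) auto
  qed
  have van: "cf (RX n) = 0" if "n \<ge> P0" for n
  proof -
    obtain P where "P \<ge> P0 + n" "Good P" using far by blast
    then show ?thesis using that unfolding Good_def by auto
  qed
  obtain l where l: "det4 (RX P0) (RX (Suc P0)) (RX (Suc (Suc P0))) (unitv l) \<noteq> 0"
    using indep3_nz[OF P0(2)] by blast
  show False
  proof (rule hyp_gen[of "X P0" "X (Suc P0)" "X (Suc (Suc P0))" P0])
    show "\<exists>l. det4 (\<lambda>k. of_int (X P0 k)) (\<lambda>k. of_int (X (Suc P0) k)) (\<lambda>k. of_int (X (Suc (Suc P0)) k)) (unitv l) \<noteq> 0"
      using l unfolding RX_fun by blast
    fix n assume "P0 \<le> n"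
    then show "det4 (\<lambda>k. of_int (X P0 k)) (\<lambda>k. of_int (X (Suc P0) k)) (\<lambda>k. of_int (X (Suc (Suc P0)) k)) (RX n) = 0"
      using van unfolding cf_def RX_fun by simp
  qed
qed

end

lemma abs_bd3:
  fixes x y z M1 M2 M3 :: real
  assumes "\<bar>x\<bar> \<le> M1" "\<bar>y\<bar> \<le> M2" "\<bar>z\<bar> \<le> M3"
  shows "\<bar>x * y * z\<bar> \<le> M1 * M2 * M3"
proof -
  have "\<bar>x * y * z\<bar> = \<bar>x\<bar> * \<bar>y\<bar> * \<bar>z\<bar>" by (simp add: abs_mult)
  also have "\<dots> \<le> M1 * M2 * M3"
    using assms by (intro mult_mono) (auto intro: order_trans[OF abs_ge_zero])
  finally show ?thesis .
qed

lemma det3r_bound: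
  fixes a b c :: "nat \<Rightarrow> real"
  assumes a: "\<And>i. i \<in> {1,2,3} \<Longrightarrow> \<bar>a i\<bar> \<le> Ma"
    and b: "\<And>i. i \<in> {1,2,3} \<Longrightarrow> \<bar>b i\<bar> \<le> Mb"
    and c: "\<And>i. i \<in> {1,2,3} \<Longrightarrow> \<bar>c i\<bar> \<le> Mc"
  shows "\<bar>det3r a b c\<bar> \<le> 6 * (Ma * Mb * Mc)"
proof -
  have t: "\<bar>a i * b j * c k\<bar> \<le> Ma * Mb * Mc" if "i \<in> {1,2,3}" "j \<in> {1,2,3}" "k \<in> {1,2,3}" for i j k
    using abs_bd3[OF a[OF that(1)] b[OF that(2)] c[OF that(3)]] .
  have t1: "\<bar>a 1 * b 2 * c 3\<bar> \<le> Ma * Mb * Mc" by (rule t) auto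
  have t2: "\<bar>a 1 * b 3 * c 2\<bar> \<le> Ma * Mb * Mc" by (rule t) auto
  have t3: "\<bar>a 2 * b 1 * c 3\<bar> \<le> Ma * Mb * Mc" by (rule t) auto
  have t4: "\<bar>a 2 * b 3 * c 1\<bar> \<le> Ma * Mb * Mc" by (rule t) auto
  have t5: "\<bar>a 3 * b 1 * c 2\<bar> \<le> Ma * Mb * Mc" by (rule t) auto
  have t6: "\<bar>a 3 * b 2 * c 1\<bar> \<le> Ma * Mb * Mc" by (rule t) auto
  show ?thesis unfolding det3r_def abs_le_iff
    using t1 t2 t3 t4 t5 t6 unfolding abs_le_iff by linarith
qed

context dioph begin

lemma Y0: "Y n 0 = real (qs n)" unfolding Y_def by simp

lemma E3:
  assumes BP: "Suc P < B" and sp: "sp2 (RX (Suc P)) (RX (Suc (Suc P))) (RX B)"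
    and nz: "idet4 (X P) (X (Suc P)) (X (Suc (Suc P))) (X (Suc B)) \<noteq> 0"
  shows "real (qs B) \<le> 48 * real (qs (Suc (Suc P))) * zeta (Suc P) * zeta P * real (qs (Suc B)) * zeta B"
proof -
  define A where "A = Suc P"
  have AB: "A < B" using BP unfolding A_def .
  have "1 \<le> \<bar>idet4 (X P) (X A) (X (Suc A)) (X (Suc B))\<bar>" using nz unfolding A_def by linarith
  then have "1 \<le> \<bar>det4 (RX P) (RX A) (RX (Suc A)) (RX (Suc B))\<bar>"
    unfolding RX_fun det4_of_int by (metis of_int_1_le_iff of_int_abs)
  also have "det4 (RX P) (RX A) (RX (Suc A)) (RX (Suc B)) = - det4 (Y P) (Y A) (Y (Suc A)) (Y (Suc B))"
    unfolding Y_skew skew_det by simp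
  finally have one: "1 \<le> \<bar>det4 (Y P) (Y A) (Y (Suc A)) (Y (Suc B))\<bar>" by simp
  obtain a b where ab: "RX B 0 = a * RX A 0 + b * RX (Suc A) 0" "RX B 1 = a * RX A 1 + b * RX (Suc A) 1"
      "RX B 2 = a * RX A 2 + b * RX (Suc A) 2" "RX B 3 = a * RX A 3 + b * RX (Suc A) 3"
    using sp unfolding sp2_def A_def by blast
  have Ysp: "Y B k = a * Y A k + b * Y (Suc A) k" if "k \<in> {0,1,2,3}" for k
    using that ab unfolding Y_skew by (auto simp: algebra_simps)
  have qpos: "0 < real (qs n)" for n using qs_ge1[of n] by simp
  define c where "c = real (qs P) / real (qs A)"
  define d where "d = real (qs (Suc B)) / real (qs B)"
  define u' where "u' = (\<lambda>k. Y P k - c * Y A k)"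
  define v' where "v' = (\<lambda>k. Y (Suc B) k - (d * a) * Y A k - (d * b) * Y (Suc A) k)"
  have c01: "0 \<le> c" "c \<le> 1" unfolding c_def using qpos[of A] qs_less[of P A]
    by (auto simp: A_def field_simps)
  have d1: "1 \<le> d" unfolding d_def using qpos[of B] qs_less[of B "Suc B"] by (auto simp: field_simps)
  have v'k: "v' k = Y (Suc B) k - d * Y B k" if "k \<in> {0,1,2,3}" for k
    unfolding v'_def using Ysp[OF that] by (simp add: algebra_simps)
  have u'0: "u' 0 = 0" unfolding u'_def c_def Y0 using qpos[of A] by simp
  have v'0: "v' 0 = 0" using v'k[of 0] unfolding d_def Y0 using qpos[of B] by simp
  have "det4 (Y P) (Y A) (Y (Suc A)) (Y (Suc B)) = det4 u' (Y A) (Y (Suc A)) v'"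
    unfolding u'_def v'_def by (rule det4_colops[symmetric])
  also have "\<dots> = Y (Suc A) 0 * det3r u' (Y A) v' - Y A 0 * det3r u' (Y (Suc A)) v'"
    by (rule det4_zero_first[of u' v', OF u'0 v'0])
  finally have dd: "det4 (Y P) (Y A) (Y (Suc A)) (Y (Suc B)) =
      real (qs (Suc A)) * det3r u' (Y A) v' - real (qs A) * det3r u' (Y (Suc A)) v'" unfolding Y0 .
  have zPA: "zeta A \<le> zeta P" "zeta (Suc A) \<le> zeta A" "zeta (Suc B) \<le> zeta B"
    using zeta_anti unfolding A_def by auto
  have bu: "\<bar>u' i\<bar> \<le> 2 * zeta P" if "i \<in> {1,2,3}" for i
  proof -
    have "c * \<bar>Y A i\<bar> \<le> \<bar>Y A i\<bar>" using c01 by (intro mult_left_le_one_le) auto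
    then have "\<bar>c * Y A i\<bar> \<le> zeta A" using c01 Y_err[OF that, of A]
      by (simp add: abs_mult)
    then show ?thesis unfolding u'_def using Y_err[OF that, of P] zPA by linarith
  qed
  have bv: "\<bar>v' i\<bar> \<le> 2 * d * zeta B" if "i \<in> {1,2,3}" for i
  proof -
    have "\<bar>d * Y B i\<bar> \<le> d * zeta B" using d1 Y_err[OF that, of B] by (simp add: abs_mult)
    moreover have "zeta B \<le> d * zeta B" using d1 zeta_pos[of B] by simp
    moreover have "\<bar>v' i\<bar> \<le> \<bar>Y (Suc B) i\<bar> + \<bar>d * Y B i\<bar>"
    proof -
      have "i \<in> {0,1,2,3}" using that by auto
      then have e: "v' i = Y (Suc B) i - d * Y B i" by (rule v'k)
      show ?thesis unfolding e by (rule abs_triangle_ineq4)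
    qed
    ultimately show ?thesis using Y_err[OF that, of "Suc B"] zPA by linarith
  qed
  have bA: "\<bar>Y A i\<bar> \<le> zeta A" "\<bar>Y (Suc A) i\<bar> \<le> zeta A" if "i \<in> {1,2,3}" for i
    using Y_err[OF that, of A] Y_err[OF that, of "Suc A"] zPA by linarith+
  define K where "K = 6 * (2 * zeta P * zeta A * (2 * d * zeta B))"
  have D1: "\<bar>det3r u' (Y A) v'\<bar> \<le> K"
    unfolding K_def by (rule det3r_bound) (use bu bA bv in auto)
  have D2: "\<bar>det3r u' (Y (Suc A)) v'\<bar> \<le> K"
    unfolding K_def by (rule det3r_bound) (use bu bA bv in auto)
  have K0: "0 \<le> K" unfolding K_def using zeta_pos[of P] zeta_pos[of A] zeta_pos[of B] d1 by simp
  have qAA: "real (qs A) \<le> real (qs (Suc A))" using qs_mono[of A] by simp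
  have "\<bar>det4 (Y P) (Y A) (Y (Suc A)) (Y (Suc B))\<bar> \<le>
      \<bar>real (qs (Suc A)) * det3r u' (Y A) v'\<bar> + \<bar>real (qs A) * det3r u' (Y (Suc A)) v'\<bar>"
    unfolding dd by (rule abs_triangle_ineq4)
  also have "\<dots> = real (qs (Suc A)) * \<bar>det3r u' (Y A) v'\<bar> + real (qs A) * \<bar>det3r u' (Y (Suc A)) v'\<bar>"
    by (simp add: abs_mult)
  also have "\<dots> \<le> real (qs (Suc A)) * K + real (qs A) * K"
    using D1 D2 by (intro add_mono mult_left_mono) auto
  also have "\<dots> \<le> real (qs (Suc A)) * K + real (qs (Suc A)) * K"
    using qAA K0 by (intro add_mono mult_right_mono) auto
  finally have "1 \<le> 2 * real (qs (Suc A)) * K" using one by linarith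
  then have "1 \<le> 48 * real (qs (Suc A)) * zeta A * zeta P * d * zeta B" unfolding K_def by (simp add: algebra_simps)
  then have "1 * real (qs B) \<le> (48 * real (qs (Suc A)) * zeta A * zeta P * d * zeta B) * real (qs B)"
    using qpos[of B] by (intro mult_right_mono) auto
  also have "\<dots> = 48 * real (qs (Suc A)) * zeta A * zeta P * real (qs (Suc B)) * zeta B"
    unfolding d_def using qpos[of B] by (simp add: field_simps)
  finally show ?thesis unfolding A_def by simp
qed

end

lemma alg_core:
  fixes a G k x y u v :: real
  assumes a: "0 < a" and G: "0 < G" "G^2 < a*G + a"
    and F1: "(1+a)*u \<le> k + y - a*x + v" and F2: "v \<le> G*u" and F3: "y \<le> u" and F4: "x \<le> y"
    and F5: "y \<le> G*x"
  shows "a * x + (a - G) * y \<le> k"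
proof -
  have G1a: "G < 1 + a"
  proof (rule ccontr)
    assume "\<not> G < 1 + a"
    then have "(1+a) * G \<le> G * G" using G by (intro mult_right_mono) auto
    moreover have "G * G < a * G + a" using G(2) by (simp add: power2_eq_square)
    ultimately show False using \<open>\<not> G < 1 + a\<close> by (simp add: algebra_simps)
  qed
  have m1: "G * ((1+a)*u) \<le> G * (k + y - a*x + v)" using F1 G by (intro mult_left_mono) auto
  have m2: "(1+a) * v \<le> (1+a) * (G*u)" using F2 a by (intro mult_left_mono) auto
  have i: "a*x + a*y - k \<le> v"
  proof -
    have "(1+a)*y \<le> (1+a)*u" using F3 a by (intro mult_left_mono) auto
    then show ?thesis using F1 by (simp add: algebra_simps)
  qed
  have m3: "(1+a-G) * (a*x + a*y - k) \<le> (1+a-G) * v" using i G1a by (intro mult_left_mono) auto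
  have "(1+a) * (a * x + (a - G) * y) \<le> (1+a) * k"
    using m1 m2 m3 by (simp add: algebra_simps)
  then show ?thesis using a by simp
qed

lemma alg_bound:
  fixes a G k x y u v :: real
  assumes a: "0 < a" and G: "0 < G" "G^2 < a*G + a"
    and F1: "(1+a)*u \<le> k + y - a*x + v" and F2: "v \<le> G*u" and F3: "y \<le> u" and F4: "x \<le> y"
    and F5: "y \<le> G*x" and x0: "0 \<le> x"
  shows "x \<le> \<bar>k\<bar> * (1/a + 1/(a + a*G - G^2))"
proof -
  have c: "a * x + (a - G) * y \<le> k" by (rule alg_core[OF assms(1-8)])
  define \<delta> where "\<delta> = a + a*G - G^2"
  have d0: "0 < \<delta>" unfolding \<delta>_def using G by simp
  have k0: "0 \<le> \<bar>k\<bar> * (1/a)" "0 \<le> \<bar>k\<bar> * (1/\<delta>)" using a d0 by auto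
  show ?thesis
  proof (cases "G \<le> a")
    case True
    then have "0 \<le> (a - G) * y" using F4 x0 by simp
    then have "a * x \<le> \<bar>k\<bar>" using c by linarith
    then have "x \<le> \<bar>k\<bar> * (1/a)" using a by (simp add: field_simps)
    then show ?thesis using k0 unfolding \<delta>_def by (simp add: distrib_left)
  next
    case False
    then have "(a - G) * (G * x) \<le> (a - G) * y" using F5 by (intro mult_left_mono_neg) auto
    then have "\<delta> * x \<le> \<bar>k\<bar>" using c unfolding \<delta>_def by (simp add: algebra_simps power2_eq_square)
    then have "x \<le> \<bar>k\<bar> * (1/\<delta>)" using d0 by (simp add: field_simps)
    then show ?thesis using k0 unfolding \<delta>_def by (simp add: distrib_left)
  qed
qed

context dioph begin

lemma growth:
  assumes g: "0 < \<gamma>" "\<gamma> < 1" and C: "0 < C"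
    and unif: "\<And>n. n \<ge> N0 \<Longrightarrow> zeta n \<le> C * real (qs (Suc n)) powr (-\<gamma>)"
    and G: "0 < G" "G^2 < (\<gamma>/(1-\<gamma>)) * G + \<gamma>/(1-\<gamma>)"
  shows "\<exists>n\<ge>N. real (qs n) powr G \<le> real (qs (Suc n))"
proof (rule ccontr)
  assume "\<not> ?thesis"
  then have con: "real (qs (Suc n)) < real (qs n) powr G" if "n \<ge> N" for n using that by force
  define a where "a = \<gamma>/(1-\<gamma>)"
  have a0: "0 < a" unfolding a_def using g by simp
  have a1: "(1+a) * (1-\<gamma>) = 1" "(1+a) * \<gamma> = a" unfolding a_def using g by (auto simp: field_simps)
  define k where "k = (1+a) * ln (48 * C^3)"
  define Bd where "Bd = \<bar>k\<bar> * (1/a + 1/(a + a*G - G^2))"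
  have qpos: "0 < real (qs n)" for n using qs_ge1[of n] by simp
  have key: "ln (real (qs (Suc P))) \<le> Bd"
    if P: "P \<ge> max N N0" and BP: "Suc P < B" and sp: "sp2 (RX (Suc P)) (RX (Suc (Suc P))) (RX B)"
      and nz: "idet4 (X P) (X (Suc P)) (X (Suc (Suc P))) (X (Suc B)) \<noteq> 0" for P B
  proof -
    define q1 where "q1 = real (qs (Suc P))"
    define q2 where "q2 = real (qs (Suc (Suc P)))"
    define qB where "qB = real (qs B)"
    define qB1 where "qB1 = real (qs (Suc B))"
    have pos: "0 < q1" "0 < q2" "0 < qB" "0 < qB1" unfolding q1_def q2_def qB_def qB1_def using qpos by auto
    have e3: "qB \<le> 48 * (q2 * zeta (Suc P)) * zeta P * (qB1 * zeta B)"
      using E3[OF BP sp nz] unfolding q2_def qB_def qB1_def by (simp add: algebra_simps)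
    have z1: "zeta (Suc P) \<le> C * q2 powr (-\<gamma>)" using unif[of "Suc P"] P unfolding q2_def by simp
    have z0: "zeta P \<le> C * q1 powr (-\<gamma>)" using unif[of P] P unfolding q1_def by simp
    have zB: "zeta B \<le> C * qB1 powr (-\<gamma>)" using unif[of B] P BP unfolding qB1_def by simp
    have pw: "q * (C * q powr (-\<gamma>)) = C * q powr (1 - \<gamma>)" if "0 < q" for q
    proof -
      have e: "q powr (1 + - \<gamma>) = q powr 1 * q powr (-\<gamma>)" by (rule powr_add)
      have "q powr 1 = q" using that by simp
      then have "q * q powr (-\<gamma>) = q powr (1 - \<gamma>)" using e by simp
      then show ?thesis by (simp add: algebra_simps)
    qed
    have h1: "q2 * zeta (Suc P) \<le> C * q2 powr (1 - \<gamma>)"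
      using mult_left_mono[OF z1, of q2] pos pw[of q2] by simp
    have h3: "qB1 * zeta B \<le> C * qB1 powr (1 - \<gamma>)"
      using mult_left_mono[OF zB, of qB1] pos pw[of qB1] by simp
    have nn: "0 \<le> q2 * zeta (Suc P)" "0 \<le> zeta P" "0 \<le> qB1 * zeta B"
      using pos zeta_pos[of "Suc P"] zeta_pos[of P] zeta_pos[of B] by auto
    have "qB \<le> 48 * (C * q2 powr (1 - \<gamma>)) * (C * q1 powr (-\<gamma>)) * (C * qB1 powr (1 - \<gamma>))"
    proof -
      have "48 * (q2 * zeta (Suc P)) * zeta P * (qB1 * zeta B) \<le>
          48 * (C * q2 powr (1 - \<gamma>)) * (C * q1 powr (-\<gamma>)) * (C * qB1 powr (1 - \<gamma>))"
      proof -
        have A1: "48 * (q2 * zeta (Suc P)) \<le> 48 * (C * q2 powr (1 - \<gamma>))"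
          using h1 by simp
        have A2: "48 * (q2 * zeta (Suc P)) * zeta P \<le> 48 * (C * q2 powr (1 - \<gamma>)) * (C * q1 powr (-\<gamma>))"
          by (rule mult_mono[OF A1 z0]) (use C nn in auto)
        show ?thesis
          by (rule mult_mono[OF A2 h3]) (use C nn in auto)
      qed
      then show ?thesis using e3 by linarith
    qed
    also have "\<dots> = (48 * C^3) * q2 powr (1 - \<gamma>) * q1 powr (-\<gamma>) * qB1 powr (1 - \<gamma>)"
      by (simp add: power3_eq_cube algebra_simps)
    finally have ineq: "qB \<le> (48 * C^3) * q2 powr (1 - \<gamma>) * q1 powr (-\<gamma>) * qB1 powr (1 - \<gamma>)" .
    have C3: "0 < 48 * C^3" using C by simp
    have "ln qB \<le> ln ((48 * C^3) * q2 powr (1 - \<gamma>) * q1 powr (-\<gamma>) * qB1 powr (1 - \<gamma>))"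
      using ineq pos C by (subst ln_le_cancel_iff) auto
    also have "\<dots> = ln (48 * C^3) + (1 - \<gamma>) * ln q2 + (-\<gamma>) * ln q1 + (1 - \<gamma>) * ln qB1"
      using pos C3 by (simp add: ln_mult ln_powr)
    finally have L: "ln qB \<le> ln (48 * C^3) + (1 - \<gamma>) * ln q2 + (-\<gamma>) * ln q1 + (1 - \<gamma>) * ln qB1" .
    have F1: "(1+a) * ln qB \<le> k + ln q2 - a * ln q1 + ln qB1"
    proof -
      have "(1+a) * ln qB \<le> (1+a) * (ln (48 * C^3) + (1 - \<gamma>) * ln q2 + (-\<gamma>) * ln q1 + (1 - \<gamma>) * ln qB1)"
        using L a0 by (intro mult_left_mono) auto
      also have "\<dots> = k + ((1+a)*(1-\<gamma>)) * ln q2 - ((1+a)*\<gamma>) * ln q1 + ((1+a)*(1-\<gamma>)) * ln qB1"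
        unfolding k_def by (simp add: algebra_simps)
      finally show ?thesis unfolding a1 by simp
    qed
    have F2: "ln qB1 \<le> G * ln qB"
    proof -
      have "qB1 < qB powr G" using con[of B] P BP unfolding qB1_def qB_def by simp
      then have "ln qB1 < ln (qB powr G)" using pos by (subst ln_less_cancel_iff) auto
      then show ?thesis using pos by (simp add: ln_powr)
    qed
    have F3: "ln q2 \<le> ln qB"
    proof -
      have "qs (Suc (Suc P)) \<le> qs B" using BP qs_less[of "Suc (Suc P)" B] by (cases "B = Suc (Suc P)") auto
      then have "q2 \<le> qB" unfolding q2_def qB_def by simp
      then show ?thesis using pos by simp
    qed
    have "q1 \<le> q2" using qs_mono[of "Suc P"] unfolding q1_def q2_def by simp
    then have F4: "ln q1 \<le> ln q2" using pos by simp
    have F5: "ln q2 \<le> G * ln q1"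
    proof -
      have "q2 < q1 powr G" using con[of "Suc P"] P unfolding q1_def q2_def by simp
      then have "ln q2 < ln (q1 powr G)" using pos by (subst ln_less_cancel_iff) auto
      then show ?thesis using pos by (simp add: ln_powr)
    qed
    have x0: "0 \<le> ln q1" unfolding q1_def using qs_ge1[of "Suc P"] by simp
    have "ln q1 \<le> Bd" unfolding Bd_def
      by (rule alg_bound[OF a0 G(1) _ F1 F2 F3 F4 F5 x0]) (use G(2) in \<open>simp add: a_def\<close>)
    then show ?thesis unfolding q1_def .
  qed
  obtain m :: nat where m: "exp Bd < real m" using reals_Archimedean2 by blast
  define N2 where "N2 = max (max N N0) m"
  obtain P B where PB: "P \<ge> N2" "B > Suc P" "sp2 (RX (Suc P)) (RX (Suc (Suc P))) (RX B)"
      "idet4 (X P) (X (Suc P)) (X (Suc (Suc P))) (X (Suc B)) \<noteq> 0"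
    using comb[of N2] by blast
  have "ln (real (qs (Suc P))) \<le> Bd" using key[OF _ PB(2-4)] PB(1) unfolding N2_def by simp
  moreover have "exp Bd < real (qs (Suc P))"
  proof -
    have "exp Bd < real m" by (rule m)
    also have "\<dots> \<le> real P" using PB(1) unfolding N2_def by simp
    also have "\<dots> < real (qs (Suc P))" using qs_ge[of "Suc P"] by simp
    finally show ?thesis .
  qed
  ultimately show False using qpos[of "Suc P"]
    by (metis exp_le_cancel_iff exp_ln not_le)
qed

end

context dioph begin

definition Uset where "Uset = {\<gamma>::real. \<gamma> > 0 \<and>
        Limsup at_top (\<lambda>t. ereal (t powr \<gamma> * psi t1 t2 t3 t)) < \<infinity>}"
definition Oset where "Oset = {\<gamma>::real. \<gamma> > 0 \<and>
        Liminf at_top (\<lambda>t. ereal (t powr \<gamma> * psi t1 t2 t3 t)) < \<infinity>}"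

lemma unif_Uset: "unif_exp t1 t2 t3 = Sup (ereal ` Uset)" unfolding unif_exp_def Uset_def ..
lemma ord_Oset: "ord_exp t1 t2 t3 = Sup (ereal ` Oset)" unfolding ord_exp_def Oset_def ..

lemma psi_le:
  assumes "1 \<le> x" "real x \<le> t"
  shows "psi t1 t2 t3 t \<le> nrm x"
  unfolding psi_eq
proof (rule Min_le)
  have sub: "{x. 1 \<le> x \<and> real x \<le> t} \<subseteq> {..nat \<lceil>t\<rceil>}"
  proof
    fix x assume "x \<in> {x. 1 \<le> x \<and> real x \<le> t}"
    then have "real x \<le> t" by simp
    then have "real x \<le> of_int \<lceil>t\<rceil>" using le_of_int_ceiling[of t] by (rule order_trans)
    then have "int x \<le> \<lceil>t\<rceil>" by (metis of_int_le_iff of_int_of_nat_eq)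
    then show "x \<in> {..nat \<lceil>t\<rceil>}" by (simp add: le_nat_iff)
  qed
  show "finite (nrm ` {x. 1 \<le> x \<and> real x \<le> t})"
    by (intro finite_imageI finite_subset[OF sub] finite_atMost)
  show "nrm x \<in> nrm ` {x. 1 \<le> x \<and> real x \<le> t}" using assms by blast
qed

lemma psi_nonneg:
  assumes "1 \<le> t"
  shows "0 \<le> psi t1 t2 t3 t"
proof -
  obtain n where "real (qs n) \<le> t" "t < real (qs (Suc n))"
  proof -
    define m where "m = (LEAST m. t < real (qs m))"
    obtain k :: nat where k: "t < real k" using reals_Archimedean2 by blast
    have "t < real (qs k)" using k qs_ge[of k] by linarith
    then have ex: "\<exists>m. t < real (qs m)" by blast
    have m1: "t < real (qs m)" unfolding m_def by (rule LeastI_ex[OF ex])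
    have "m \<noteq> 0" using m1 assms by (metis of_nat_1 qs.simps(1) not_less m_def)
    then obtain n where n: "m = Suc n" by (cases m) auto
    have "\<not> t < real (qs n)" using not_less_Least[of n "\<lambda>m. t < real (qs m)"] n unfolding m_def by simp
    then show ?thesis using that[of n] m1 n by simp
  qed
  then have "psi t1 t2 t3 t = nrm (qs n)" by (rule psi_qs)
  then show ?thesis using nrm_pos[OF qs_ge1[of n]] by simp
qed

lemma third_in_U: "1/3 \<in> Uset"
proof -
  have b: "t powr (1/3) * psi t1 t2 t3 t \<le> 2" if t: "1 \<le> t" for t :: real
  proof -
    define r where "r = t powr (1/3)"
    have r1: "1 \<le> r" unfolding r_def using t by (intro ge_one_powr_ge_zero) auto
    have r3: "r ^ 3 = t" unfolding r_def using t by (simp add: powr_realpow[symmetric] powr_powr)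
    define N where "N = nat \<lfloor>r\<rfloor>"
    have N1: "N \<ge> 1" unfolding N_def using r1 by linarith
    have Nr: "real N \<le> r" "r < real N + 1" unfolding N_def using r1 by linarith+
    have "real N ^ 3 \<le> r ^ 3" using Nr(1) by (intro power_mono) auto
    then have N3: "real (N^3) \<le> t" using r3 by simp
    obtain x where x: "1 \<le> x" "x \<le> N^3" "nrm x < 1 / real N" using dirichlet[OF N1] by blast
    have "real x \<le> t" using x(2) N3 by (meson of_nat_le_iff order_trans)
    then have ps: "psi t1 t2 t3 t \<le> nrm x" using psi_le[OF x(1)] by blast
    have p0: "0 \<le> psi t1 t2 t3 t" using psi_nonneg[OF t] .
    have "r * psi t1 t2 t3 t \<le> (2 * real N) * psi t1 t2 t3 t"
      using Nr N1 p0 by (intro mult_right_mono) auto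
    also have "\<dots> \<le> (2 * real N) * (1 / real N)"
      using ps x(3) N1 by (intro mult_left_mono) auto
    also have "\<dots> = 2" using N1 by simp
    finally show ?thesis unfolding r_def .
  qed
  have "Limsup at_top (\<lambda>t. ereal (t powr (1/3) * psi t1 t2 t3 t)) \<le> ereal 2"
    by (rule Limsup_bounded) (use b in \<open>auto simp: eventually_at_top_linorder intro!: exI[of _ 1]\<close>)
  then show ?thesis unfolding Uset_def by (auto simp: le_less_trans)
qed

end

context dioph begin

lemma U_down:
  assumes "\<gamma> \<in> Uset" "0 < \<gamma>'" "\<gamma>' \<le> \<gamma>"
  shows "\<gamma>' \<in> Uset"
proof -
  have "\<forall>\<^sub>F t in at_top. ereal (t powr \<gamma>' * psi t1 t2 t3 t) \<le> ereal (t powr \<gamma> * psi t1 t2 t3 t)"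
    unfolding eventually_at_top_linorder
  proof (intro exI[of _ 1] allI impI)
    fix t :: real assume t: "1 \<le> t"
    have "t powr \<gamma>' \<le> t powr \<gamma>" using t assms(3) by (intro powr_mono) auto
    then show "ereal (t powr \<gamma>' * psi t1 t2 t3 t) \<le> ereal (t powr \<gamma> * psi t1 t2 t3 t)"
      using psi_nonneg[OF t] by (simp add: mult_right_mono)
  qed
  then have "Limsup at_top (\<lambda>t. ereal (t powr \<gamma>' * psi t1 t2 t3 t)) \<le>
      Limsup at_top (\<lambda>t. ereal (t powr \<gamma> * psi t1 t2 t3 t))" by (rule Limsup_mono)
  then show ?thesis using assms unfolding Uset_def by auto
qed

lemma U_bound:
  assumes "\<gamma> \<in> Uset"
  shows "\<exists>C>0. \<exists>N0. \<forall>n\<ge>N0. zeta n \<le> C * real (qs (Suc n)) powr (-\<gamma>)"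
proof -
  have g0: "0 < \<gamma>" and ls: "Limsup at_top (\<lambda>t. ereal (t powr \<gamma> * psi t1 t2 t3 t)) < \<infinity>"
    using assms unfolding Uset_def by auto
  obtain M :: real where M: "Limsup at_top (\<lambda>t. ereal (t powr \<gamma> * psi t1 t2 t3 t)) < ereal M" "0 < M"
  proof (cases "Limsup at_top (\<lambda>t. ereal (t powr \<gamma> * psi t1 t2 t3 t))")
    case (real r)
    then show ?thesis using that[of "max r 0 + 1"] by auto
  next
    case PInf then show ?thesis using ls by simp
  next
    case MInf then show ?thesis using that[of 1] by simp
  qed
  have "\<forall>\<^sub>F t in at_top. ereal (t powr \<gamma> * psi t1 t2 t3 t) < ereal M"
    by (rule Limsup_lessD[OF M(1)])
  then obtain T where T: "\<And>t. t \<ge> T \<Longrightarrow> t powr \<gamma> * psi t1 t2 t3 t < M"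
    unfolding eventually_at_top_linorder by auto
  define C where "C = M * 2 powr \<gamma>"
  have C0: "0 < C" unfolding C_def using M(2) by simp
  obtain N0 :: nat where N0: "T < real N0" using reals_Archimedean2 by blast
  have "zeta n \<le> C * real (qs (Suc n)) powr (-\<gamma>)" if n: "n \<ge> N0" for n
  proof -
    define q where "q = real (qs (Suc n))"
    define t where "t = q - 1/2"
    have qq: "real (qs n) + 1 \<le> q" unfolding q_def using qs_mono[of n] by simp
    have q1: "1 \<le> real (qs n)" using qs_ge1[of n] by simp
    have tT: "T \<le> t"
    proof -
      have "real n + 1 \<le> real (qs n)" using qs_ge[of n] by simp
      then show ?thesis unfolding t_def using qq N0 n by simp
    qed
    have t1: "real (qs n) \<le> t" "t < real (qs (Suc n))" unfolding t_def using qq q_def by auto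
    have tpos: "0 < t" using t1 q1 by linarith
    have ps: "psi t1 t2 t3 t = zeta n" unfolding zeta_def by (rule psi_qs[OF t1])
    have lt: "t powr \<gamma> * zeta n < M" using T[OF tT] ps by simp
    have tp: "0 < t powr \<gamma>" using tpos by simp
    have z: "zeta n \<le> M * t powr (-\<gamma>)"
      using lt tp by (simp add: powr_minus_divide field_simps)
    have "q / 2 \<le> t" unfolding t_def using qq q1 by simp
    moreover have "0 < q / 2" using qq q1 by simp
    ultimately have "t powr (-\<gamma>) \<le> (q / 2) powr (-\<gamma>)" using g0 by (intro powr_mono2') auto
    also have "\<dots> = 2 powr \<gamma> * q powr (-\<gamma>)"
      using qq q1 by (simp add: powr_divide powr_minus_divide)
    finally have "M * t powr (-\<gamma>) \<le> M * (2 powr \<gamma> * q powr (-\<gamma>))" using M(2) by simp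
    then show ?thesis using z unfolding C_def q_def by (simp add: algebra_simps)
  qed
  then show ?thesis using C0 by blast
qed

lemma O_from:
  assumes b: "0 < b" and inf: "\<And>N. \<exists>n\<ge>N. zeta n \<le> C * real (qs n) powr (-b)"
  shows "b \<in> Oset"
proof -
  have "Liminf at_top (\<lambda>t. ereal (t powr b * psi t1 t2 t3 t)) \<le> ereal C"
  proof (rule ccontr)
    assume "\<not> ?thesis"
    then have "ereal C < Liminf at_top (\<lambda>t. ereal (t powr b * psi t1 t2 t3 t))" by simp
    then have "\<forall>\<^sub>F t in at_top. ereal C < ereal (t powr b * psi t1 t2 t3 t)" by (rule less_LiminfD)
    then obtain T where T: "\<And>t. t \<ge> T \<Longrightarrow> C < t powr b * psi t1 t2 t3 t"
      unfolding eventually_at_top_linorder by auto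
    obtain N :: nat where N: "T < real N" using reals_Archimedean2 by blast
    obtain n where n: "n \<ge> N" "zeta n \<le> C * real (qs n) powr (-b)" using inf by blast
    define t where "t = real (qs n)"
    have "real n + 1 \<le> t" unfolding t_def using qs_ge[of n] by simp
    then have tT: "T \<le> t" using N n by simp
    have tpos: "0 < t" unfolding t_def using qs_ge1[of n] by simp
    have ps: "psi t1 t2 t3 t = zeta n" unfolding zeta_def t_def
      by (rule psi_qs) (use qs_mono[of n] in auto)
    have "t powr b * zeta n \<le> t powr b * (C * t powr (-b))"
      using n(2) tpos unfolding t_def by (intro mult_left_mono) auto
    also have "\<dots> = C" using tpos by (simp add: powr_minus_divide)
    finally show False using T[OF tT] ps by simp
  qed
  then show ?thesis unfolding Oset_def using b by (auto simp: le_less_trans)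
qed

lemma growth_O:
  assumes U: "\<gamma> \<in> Uset" and g1: "\<gamma> < 1"
    and G: "0 < G" "G^2 < (\<gamma>/(1-\<gamma>)) * G + \<gamma>/(1-\<gamma>)"
  shows "\<gamma> * G \<in> Oset"
proof -
  have g0: "0 < \<gamma>" using U unfolding Uset_def by auto
  obtain C N0 where C: "0 < C" "\<And>n. n \<ge> N0 \<Longrightarrow> zeta n \<le> C * real (qs (Suc n)) powr (-\<gamma>)"
    using U_bound[OF U] by blast
  show ?thesis
  proof (rule O_from[of _ C])
    show "0 < \<gamma> * G" using g0 G by simp
    fix N
    obtain n where n: "n \<ge> max N N0" "real (qs n) powr G \<le> real (qs (Suc n))"
      using growth[OF g0 g1 C(1) C(2) G] by blast
    have q0: "0 < real (qs n)" using qs_ge1[of n] by simp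
    have "zeta n \<le> C * real (qs (Suc n)) powr (-\<gamma>)" using C(2) n by simp
    also have "\<dots> \<le> C * (real (qs n) powr G) powr (-\<gamma>)"
      using n(2) q0 g0 C(1) by (intro mult_left_mono powr_mono2') auto
    also have "\<dots> = C * real (qs n) powr (- (\<gamma> * G))" by (simp add: powr_powr algebra_simps)
    finally show "\<exists>n\<ge>N. zeta n \<le> C * real (qs n) powr (- (\<gamma> * G))" using n by auto
  qed
qed

end

lemma g3_alt: "g3 x = (1/2) * (x/(1-x) + sqrt ((x/(1-x))^2 + 4 * (x/(1-x))))"
  unfolding g3_def by simp

lemma quad_lt:
  fixes A G :: real
  assumes A: "0 < A" and G: "0 < G" "G < (1/2) * (A + sqrt (A^2 + 4 * A))"
  shows "G^2 < A * G + A"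
proof (cases "2 * G - A < 0")
  case True
  then have h: "G * G < G * A" using G by (intro mult_strict_left_mono) auto
  show ?thesis using h A power2_eq_square[of G] mult.commute[of G A] by linarith
next
  case False
  have "2 * G - A < sqrt (A^2 + 4 * A)" using G by simp
  then have "(2 * G - A)^2 < (sqrt (A^2 + 4 * A))^2" using False by (intro power_strict_mono) auto
  also have "\<dots> = A^2 + 4 * A" using A by simp
  finally show ?thesis by (simp add: power2_eq_square algebra_simps)
qed

lemma g3_ge:
  assumes "0 < x" "x < 1"
  shows "x / (1 - x) \<le> g3 x"
proof -
  define A where "A = x/(1-x)"
  have A: "0 < A" unfolding A_def using assms by simp
  have "A \<le> sqrt (A^2 + 4 * A)" by (rule real_le_rsqrt) (use A in simp)
  then show ?thesis unfolding g3_alt A_def[symmetric] by simp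
qed

context dioph begin

lemma O_of_gamma:
  assumes U: "\<gamma> \<in> Uset" and g1: "\<gamma> < 1" and b: "0 < b" "b < \<gamma> * g3 \<gamma>"
  shows "b \<in> Oset"
proof -
  have g0: "0 < \<gamma>" using U unfolding Uset_def by auto
  define G where "G = b / \<gamma>"
  have G0: "0 < G" unfolding G_def using b g0 by simp
  have "G < g3 \<gamma>" unfolding G_def using b g0 by (simp add: field_simps)
  then have "G < (1/2) * (\<gamma>/(1-\<gamma>) + sqrt ((\<gamma>/(1-\<gamma>))^2 + 4 * (\<gamma>/(1-\<gamma>))))" unfolding g3_alt .
  then have "G^2 < (\<gamma>/(1-\<gamma>)) * G + \<gamma>/(1-\<gamma>)" using g0 g1 G0 by (intro quad_lt) auto
  then have "\<gamma> * G \<in> Oset" by (rule growth_O[OF U g1 G0])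
  then show ?thesis unfolding G_def using g0 by simp
qed

lemma alpha_ge: "ereal (1/3) \<le> unif_exp t1 t2 t3"
  unfolding unif_Uset using third_in_U by (intro Sup_upper) auto

lemma Sup_O_ge:
  assumes T: "0 < T" and all: "\<And>b. 0 < b \<Longrightarrow> b < T \<Longrightarrow> b \<in> Oset"
  shows "ereal T \<le> ord_exp t1 t2 t3"
  unfolding ord_Oset le_Sup_iff
proof (intro allI impI)
  fix y assume "y < ereal T"
  then obtain z where z: "y < ereal z" "ereal z < ereal T" using ereal_dense2 by blast
  define b where "b = max z (T/2)"
  have "b \<in> Oset" using z T unfolding b_def by (intro all) auto
  moreover have "y < ereal b" using z unfolding b_def by (metis ereal_less_eq(3) max.cobounded1 order_less_le_trans)
  ultimately show "\<exists>a\<in>ereal ` Oset. y < a" by blast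
qed

lemma case_lt:
  assumes lt: "unif_exp t1 t2 t3 < 1"
  shows "ereal (real_of_ereal (unif_exp t1 t2 t3) * g3 (real_of_ereal (unif_exp t1 t2 t3))) \<le> ord_exp t1 t2 t3"
proof -
  define \<alpha> where "\<alpha> = real_of_ereal (unif_exp t1 t2 t3)"
  have ae: "unif_exp t1 t2 t3 = ereal \<alpha>" unfolding \<alpha>_def using alpha_ge lt
    by (cases "unif_exp t1 t2 t3") auto
  have a3: "1/3 \<le> \<alpha>" "\<alpha> < 1" using alpha_ge lt unfolding ae by auto
  define h where "h x = x * g3 x" for x
  define T where "T = h \<alpha>"
  have T0: "0 < T" unfolding T_def h_def using g3_ge[of \<alpha>] a3
    by (smt (verit) divide_pos_pos mult_pos_pos)
  have cont: "isCont h \<alpha>" unfolding h_def g3_def using a3 by (intro continuous_intros) auto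
  have all: "b \<in> Oset" if b: "0 < b" "b < T" for b
  proof -
    have "h \<midarrow>\<alpha>\<rightarrow> T" using cont unfolding isCont_def T_def .
    then obtain s where s: "0 < s" "\<And>x. x \<noteq> \<alpha> \<Longrightarrow> \<bar>x - \<alpha>\<bar> < s \<Longrightarrow> \<bar>h x - T\<bar> < T - b"
      unfolding LIM_eq using b by (metis diff_gt_0_iff_gt real_norm_def)
    define g0 where "g0 = max (\<alpha> - s/2) (\<alpha>/2)"
    have g0a: "g0 < \<alpha>" unfolding g0_def using s a3 by simp
    then have "ereal g0 < Sup (ereal ` Uset)" using ae unfolding unif_Uset by simp
    then obtain g1 where g1: "g1 \<in> Uset" "g0 < g1" unfolding less_Sup_iff by auto
    have "ereal g1 \<le> Sup (ereal ` Uset)" using g1 by (intro Sup_upper) auto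
    then have g1a: "g1 \<le> \<alpha>" using ae unfolding unif_Uset by simp
    have hb: "b < h g1"
    proof (cases "g1 = \<alpha>")
      case True then show ?thesis using b unfolding T_def by simp
    next
      case False
      have "\<bar>g1 - \<alpha>\<bar> < s" using g1 g1a unfolding g0_def using s by auto
      then have "\<bar>h g1 - T\<bar> < T - b" using s(2) False by blast
      then show ?thesis by linarith
    qed
    show ?thesis
      by (rule O_of_gamma[OF g1(1)]) (use g1a a3 b hb in \<open>auto simp: h_def\<close>)
  qed
  show ?thesis using Sup_O_ge[OF T0 all] unfolding T_def h_def \<alpha>_def .
qed

lemma case_eq:
  assumes eq: "unif_exp t1 t2 t3 = 1"
  shows "ord_exp t1 t2 t3 = \<infinity>"
proof (rule ereal_top)
  fix B :: real
  define b where "b = max B 1"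
  define g0 where "g0 = 1 - 1 / (4 * b + 4)"
  have b1: "1 \<le> b" unfolding b_def by simp
  have g0b: "3/4 < g0" "g0 < 1" unfolding g0_def using b1 by (auto simp: field_simps)
  have "ereal g0 < Sup (ereal ` Uset)" using eq g0b unfolding unif_Uset by simp
  then obtain g1 where g1: "g1 \<in> Uset" "g0 < g1" unfolding less_Sup_iff by auto
  define \<gamma> where "\<gamma> = min g1 ((g0 + 1) / 2)"
  have gU: "\<gamma> \<in> Uset" unfolding \<gamma>_def using g1 g0b by (intro U_down[OF g1(1)]) auto
  have "(g0 + 1) / 2 < 1" using g0b by simp
  then have gr: "g0 < \<gamma>" "\<gamma> < 1" unfolding \<gamma>_def using g1 g0b by (auto simp: min_less_iff_disj)
  have "b < \<gamma> * g3 \<gamma>"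
  proof -
    have om: "1 - \<gamma> < 1 / (4 * b + 4)" using gr unfolding g0_def by simp
    have om0: "0 < 1 - \<gamma>" using gr by simp
    have "4 * b + 4 < 1 / (1 - \<gamma>)" using om om0 b1 by (simp add: field_simps)
    moreover have "(1/2) * (1 / (1 - \<gamma>)) \<le> \<gamma> * (\<gamma> / (1 - \<gamma>))"
    proof -
      have g34: "3/4 \<le> \<gamma>" using gr g0b by linarith
      have "(3/4) * (3/4) \<le> \<gamma> * \<gamma>" using g34 by (intro mult_mono) auto
      then have "(1/2) \<le> \<gamma> * \<gamma>" by linarith
      then have "(1/2) / (1 - \<gamma>) \<le> (\<gamma> * \<gamma>) / (1 - \<gamma>)" using om0 by (intro divide_right_mono) auto
      then show ?thesis by simp
    qed
    moreover have "\<gamma> * (\<gamma> / (1 - \<gamma>)) \<le> \<gamma> * g3 \<gamma>"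
      using g3_ge[of \<gamma>] gr g0b by (intro mult_left_mono) auto
    ultimately show ?thesis using b1 by linarith
  qed
  then have "b \<in> Oset" using O_of_gamma[OF gU gr(2)] b1 by simp
  then have "ereal b \<le> ord_exp t1 t2 t3" unfolding ord_Oset by (intro Sup_upper) auto
  then show "ereal B \<le> ord_exp t1 t2 t3" unfolding b_def by (metis ereal_less_eq(3) max.cobounded1 order_trans)
qed

end


theorem theorem5:
  fixes th1 th2 th3 :: real
  assumes indep: "\<And>a0 a1 a2 a3 :: int.
      of_int a0 + of_int a1 * th1 + of_int a2 * th2 + of_int a3 * th3 = 0 \<Longrightarrow>
      a0 = 0 \<and> a1 = 0 \<and> a2 = 0 \<and> a3 = 0"
  shows "(unif_exp th1 th2 th3 < 1 \<longrightarrow>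
            ord_exp th1 th2 th3 \<ge>
              ereal (real_of_ereal (unif_exp th1 th2 th3) * g3 (real_of_ereal (unif_exp th1 th2 th3))))
       \<and> (unif_exp th1 th2 th3 = 1 \<longrightarrow> ord_exp th1 th2 th3 = \<infinity>)"
proof -
  interpret dioph th1 th2 th3 by unfold_locales (rule indep)
  show ?thesis using case_lt case_eq by blast
qed

end
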